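(* Let $d\ge2$, $n\ge1$, $k=\lfloor d/2\rfloor$, let $(p_1,\dots,p_n)\in V(I_{d,n})$ and let $z_1,\dots,z_n\in\mathbb{C}^{2^k}$ be arbitrary. Then: (a) the $n\times n$ matrix $S=(\langle ij\rangle)_{i,j}$ has rank $\le 2^k$ and zero diagonal; $S$ is symmetric if $k\equiv0,3\pmod4$ and skew symmetric otherwise; (b) for each $j$, the $n\times n$ matrix $T_j=(\langle ijk\rangle)_{i,k}$ has rank $\le 2^{k-1}$ and its $j$-th row and $j$-th column are zero (i.e. $\langle jjk\rangle=\langle ijj\rangle=0$); $T_j$ is symmetric if $d\equiv1,2,3,4\pmod8$ and skew symmetric otherwise; (c) $T_1+T_2+\cdots+T_n=0$.
   Context: $x\cdot y=-x_1y_1+x_2y_2+\cdots+x_dy_d$; $V(I_{d,n})\subset(\mathbb{C}^d)^n$ is the set of tuples $(p_1,\dots,p_n)$ with $p_i\cdot p_i=0$ for all $i$ and $\sum_i p_i=0$. Dirac matrices $\Gamma_1,\dots,\Gamma_d$ ($2^k\times2^k$): for $d=2$, $\Gamma_1=\begin{pmatrix}0&1\\-1&0\end{pmatrix}$, $\Gamma_2=\begin{pmatrix}0&1\\1&0\end{pmatrix}$; for even $d=2k\ge4$, with $\Gamma'_j$ those for $d-2$ and $\otimes$ the Kronecker product, $\Gamma_j=\Gamma'_j\otimes\mathrm{diag}(-1,1)$ ($j\le d-2$), $\Gamma_{d-1}=\mathrm{Id}_{2^{k-1}}\otimes\begin{pmatrix}0&1\\1&0\end{pmatrix}$, $\Gamma_d=\mathrm{Id}_{2^{k-1}}\otimes\begin{pmatrix}0&-i\\i&0\end{pmatrix}$;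 for odd $d=2k+1$, $\Gamma_1,\dots,\Gamma_{2k}$ as for $2k$ and $\Gamma_d=-i^{k-1}\Gamma_1\cdots\Gamma_{2k}$. Put $\Gamma_{2k+1}:=-i^{k-1}\Gamma_1\cdots\Gamma_{2k}$. Charge conjugation matrix: $C=\Gamma_{2k+1}\Gamma_4\Gamma_6\cdots\Gamma_{2k}\Gamma_1$ if $d\equiv0\pmod4$, $C=\Gamma_4\Gamma_6\cdots\Gamma_{2k}\Gamma_1$ otherwise ($C=\Gamma_1$ for $k=1$). For $i=1,\dots,n$ let $P_i=-p_{i1}\Gamma_1+p_{i2}\Gamma_2+\cdots+p_{id}\Gamma_d$ and $|i\rangle=P_iz_i\in\mathbb{C}^{2^k}$. Spinor brackets: $\langle ij\rangle=|i\rangle^TC|j\rangle$ and $\langle ijk\rangle=|i\rangle^TCP_j|k\rangle$. *)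

theory Defs
  imports Complex_Main "Jordan_Normal_Form.Matrix" "Jordan_Normal_Form.DL_Rank"
begin

definition kron :: "complex mat \<Rightarrow> complex mat \<Rightarrow> complex mat" where
  "kron A B = mat (dim_row A * dim_row B) (dim_col A * dim_col B)
     (\<lambda>(i,j). A $$ (i div dim_row B, j div dim_col B) * B $$ (i mod dim_row B, j mod dim_col B))"

definition mat2 :: "complex \<Rightarrow> complex \<Rightarrow> complex \<Rightarrow> complex \<Rightarrow> complex mat" where
  "mat2 a b c e = mat_of_rows_list 2 [[a, b], [c, e]]"

(* gamma_even k j : Dirac matrix Gamma_j (j = 1..2k) for d = 2k, k >= 1; a 2^k x 2^k matrix *)
fun gamma_even :: "nat \<Rightarrow> nat \<Rightarrow> complex mat" where
  "gamma_even 0 j = 1\<^sub>m 1"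
| "gamma_even (Suc 0) j = (if j = 1 then mat2 0 1 (-1) 0 else mat2 0 1 1 0)"
| "gamma_even (Suc (Suc k)) j =
     (if j \<le> 2 * Suc k then kron (gamma_even (Suc k) j) (mat2 (-1) 0 0 1)
      else if j = 2 * Suc k + 1 then kron (1\<^sub>m (2 ^ Suc k)) (mat2 0 1 1 0)
      else kron (1\<^sub>m (2 ^ Suc k)) (mat2 0 (-\<i>) \<i> 0))"

definition mat_prod_list :: "nat \<Rightarrow> complex mat list \<Rightarrow> complex mat" where
  "mat_prod_list N Ms = foldr (*) Ms (1\<^sub>m N)"

definition gamma_top :: "nat \<Rightarrow> complex mat" where
  "gamma_top k = (- (\<i> ^ (k - 1))) \<cdot>\<^sub>m
     mat_prod_list (2 ^ k) (map (gamma_even k) [1..<2 * k + 1])"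

definition dirac :: "nat \<Rightarrow> nat \<Rightarrow> complex mat" where
  "dirac d j = (if j \<le> 2 * (d div 2) then gamma_even (d div 2) j else gamma_top (d div 2))"

definition charge_conj :: "nat \<Rightarrow> complex mat" where
  "charge_conj d = (let k = d div 2;
      G = mat_prod_list (2 ^ k) (map (\<lambda>m. gamma_even k (2 * m)) [2..<k + 1]) * gamma_even k 1
    in if d mod 4 = 0 then gamma_top k * G else G)"

definition mdot :: "nat \<Rightarrow> (nat \<Rightarrow> complex) \<Rightarrow> (nat \<Rightarrow> complex) \<Rightarrow> complex" where
  "mdot d x y = - x 1 * y 1 + (\<Sum>j = 2..d. x j * y j)"

(* (p_1,...,p_n) \<in> V(I_{d,n}); p i j is the j-th coordinate of p_i *)
definition in_V :: "nat \<Rightarrow> nat \<Rightarrow> (nat \<Rightarrow> nat \<Rightarrow> complex) \<Rightarrow> bool" where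
  "in_V d n p \<longleftrightarrow> (\<forall>i\<in>{1..n}. mdot d (p i) (p i) = 0) \<and> (\<forall>j\<in>{1..d}. (\<Sum>i = 1..n. p i j) = 0)"

definition slashP :: "nat \<Rightarrow> (nat \<Rightarrow> complex) \<Rightarrow> complex mat" where
  "slashP d x = (- x 1) \<cdot>\<^sub>m dirac d 1
     + foldr (+) (map (\<lambda>j. x j \<cdot>\<^sub>m dirac d j) [2..<d + 1]) (0\<^sub>m (2 ^ (d div 2)) (2 ^ (d div 2)))"

definition ket :: "nat \<Rightarrow> (nat \<Rightarrow> complex) \<Rightarrow> complex vec \<Rightarrow> complex vec" where
  "ket d x z = slashP d x *\<^sub>v z"

definition br2 :: "nat \<Rightarrow> (nat \<Rightarrow> nat \<Rightarrow> complex) \<Rightarrow> (nat \<Rightarrow> complex vec) \<Rightarrow> nat \<Rightarrow> nat \<Rightarrow> complex" where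
  "br2 d p z i j = ket d (p i) (z i) \<bullet> (charge_conj d *\<^sub>v ket d (p j) (z j))"

definition br3 :: "nat \<Rightarrow> (nat \<Rightarrow> nat \<Rightarrow> complex) \<Rightarrow> (nat \<Rightarrow> complex vec) \<Rightarrow> nat \<Rightarrow> nat \<Rightarrow> nat \<Rightarrow> complex" where
  "br3 d p z i j k = ket d (p i) (z i) \<bullet> (charge_conj d *\<^sub>v (slashP d (p j) *\<^sub>v ket d (p k) (z k)))"

(* S = (<ij>)_{i,j=1..n}, stored 0-based *)
definition Smat :: "nat \<Rightarrow> nat \<Rightarrow> (nat \<Rightarrow> nat \<Rightarrow> complex) \<Rightarrow> (nat \<Rightarrow> complex vec) \<Rightarrow> complex mat" where
  "Smat d n p z = mat n n (\<lambda>(a, b). br2 d p z (a + 1) (b + 1))"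

(* T_j = (<ijk>)_{i,k=1..n}, stored 0-based *)
definition Tmat :: "nat \<Rightarrow> nat \<Rightarrow> (nat \<Rightarrow> nat \<Rightarrow> complex) \<Rightarrow> (nat \<Rightarrow> complex vec) \<Rightarrow> nat \<Rightarrow> complex mat" where
  "Tmat d n p z j = mat n n (\<lambda>(a, b). br3 d p z (a + 1) j (b + 1))"

abbreviation mrank :: "nat \<Rightarrow> complex mat \<Rightarrow> nat" where
  "mrank n M \<equiv> vec_space.rank n (M :: complex mat)"

end

theory Submission
  imports Defs "Jordan_Normal_Form.Matrix_Kernel"
begin

lemma kron_dims[simp]: "dim_row (kron A B) = dim_row A * dim_row B" "dim_col (kron A B) = dim_col A * dim_col B"
  by (simp_all add: kron_def)

lemma kron_carrier: "A \<in> carrier_mat a b \<Longrightarrow> B \<in> carrier_mat c e \<Longrightarrow> kron A B \<in> carrier_mat (a*c) (b*e)"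
  unfolding carrier_mat_def kron_def by simp

lemma index_kron[simp]: "i < dim_row A * dim_row B \<Longrightarrow> j < dim_col A * dim_col B \<Longrightarrow>
  kron A B $$ (i,j) = A $$ (i div dim_row B, j div dim_col B) * B $$ (i mod dim_row B, j mod dim_col B)"
  unfolding kron_def by (simp only: index_mat(1) prod.case)

lemma mod_lt_mult[simp]: "(i::nat) < x * a \<Longrightarrow> i mod a < a"
  by (cases "a = 0") auto

lemma div_lt_mult[simp]: "(i::nat) < x * a \<Longrightarrow> i div a < x"
  by (simp add: less_mult_imp_div_less)

lemma sum_div_mod:
  fixes f :: "nat \<Rightarrow> nat \<Rightarrow> 'a::comm_monoid_add"
  assumes "e > 0"
  shows "(\<Sum>l<b*e. f (l div e) (l mod e)) = (\<Sum>x<b. \<Sum>y<e. f x y)"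
proof (induction b)
  case 0
  then show ?case by simp
next
  case (Suc b)
  define g where "g = (\<lambda>l. f (l div e) (l mod e))"
  have e1: "Suc b * e = b*e + e" by simp
  have "(\<Sum>l<Suc b*e. g l) = (\<Sum>l\<in>{0..<b*e+e}. g l)"
    unfolding e1 lessThan_atLeast0 ..
  also have "\<dots> = (\<Sum>l\<in>{0..<b*e}. g l) + (\<Sum>l\<in>{b*e..<b*e+e}. g l)"
    by (rule sum.atLeastLessThan_concat[symmetric]) auto
  also have "(\<Sum>l\<in>{b*e..<b*e+e}. g l) = (\<Sum>y\<in>{0..<e}. g (y + b*e))"
    using sum.shift_bounds_nat_ivl[of g 0 "b*e" e] by (simp add: add.commute)
  also have "\<dots> = (\<Sum>y\<in>{0..<e}. f b y)"
    using assms unfolding g_def by (intro sum.cong refl) auto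
  also have "(\<Sum>l\<in>{0..<b*e}. g l) = (\<Sum>x<b. \<Sum>y<e. f x y)"
    using Suc unfolding g_def lessThan_atLeast0 by simp
  finally show ?case unfolding g_def lessThan_atLeast0 by simp
qed

lemma kron_mult:
  assumes A: "A \<in> carrier_mat a b" and B: "B \<in> carrier_mat c e"
    and C: "C \<in> carrier_mat b f" and D: "D \<in> carrier_mat e g" and e: "e > 0"
  shows "kron A B * kron C D = kron (A * C) (B * D)"
proof (rule eq_matI)
  fix i j assume i: "i < dim_row (kron (A * C) (B * D))" and j: "j < dim_col (kron (A * C) (B * D))"
  from i j A B C D have i': "i < a * c" and j': "j < f * g" by auto
  have c0: "c > 0" using i' by (cases c) auto
  have g0: "g > 0" using j' by (cases g) auto
  have id: "i div c < a" "i mod c < c" "j div g < f" "j mod g < g"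
    using i' j' c0 g0 by (auto simp: less_mult_imp_div_less)
  have "(kron A B * kron C D) $$ (i,j) = (\<Sum>l<b*e. kron A B $$ (i,l) * kron C D $$ (l,j))"
    using A B C D i' j' by (simp add: scalar_prod_def atLeast0LessThan)
  also have "\<dots> = (\<Sum>l<b*e. (A $$ (i div c, l div e) * C $$ (l div e, j div g)) * (B $$ (i mod c, l mod e) * D $$ (l mod e, j mod g)))"
    using A B C D i' j' by (intro sum.cong refl) (auto simp: algebra_simps)
  also have "\<dots> = (\<Sum>x<b. \<Sum>y<e. (A $$ (i div c, x) * C $$ (x, j div g)) * (B $$ (i mod c, y) * D $$ (y, j mod g)))"
    by (rule sum_div_mod[OF e])
  also have "\<dots> = (\<Sum>x<b. A $$ (i div c, x) * C $$ (x, j div g)) * (\<Sum>y<e. B $$ (i mod c, y) * D $$ (y, j mod g))"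
    by (simp add: sum_product)
  also have "\<dots> = kron (A * C) (B * D) $$ (i,j)"
    using A B C D i' j' id by (simp add: scalar_prod_def atLeast0LessThan)
  finally show "(kron A B * kron C D) $$ (i,j) = kron (A * C) (B * D) $$ (i,j)" .
qed (use A B C D in auto)

lemma kron_transpose: "transpose_mat (kron A B) = kron (transpose_mat A) (transpose_mat B)"
proof (rule eq_matI)
  fix i j assume i: "i < dim_row (kron (transpose_mat A) (transpose_mat B))"
    and j: "j < dim_col (kron (transpose_mat A) (transpose_mat B))"
  then have i': "i < dim_col A * dim_col B" and j': "j < dim_row A * dim_row B" by auto
  have c0: "dim_col B > 0" using i' by (cases "dim_col B") auto
  have g0: "dim_row B > 0" using j' by (cases "dim_row B") auto
  have id: "i div dim_col B < dim_col A" "i mod dim_col B < dim_col B" "j div dim_row B < dim_row A" "j mod dim_row B < dim_row B"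
    using i' j' c0 g0 by (auto simp: less_mult_imp_div_less)
  show "transpose_mat (kron A B) $$ (i, j) = kron (transpose_mat A) (transpose_mat B) $$ (i, j)"
    using i' j' id by simp
qed auto

lemma kron_add_left: assumes "A \<in> carrier_mat a b" "A' \<in> carrier_mat a b"
  shows "kron (A + A') B = kron A B + kron A' B"
proof (rule eq_matI)
  fix i j assume i: "i < dim_row (kron A B + kron A' B)" and j: "j < dim_col (kron A B + kron A' B)"
  then have i': "i < a * dim_row B" and j': "j < b * dim_col B" using assms by auto
  have "i div dim_row B < a" "j div dim_col B < b" using i' j' by auto
  then show "kron (A + A') B $$ (i, j) = (kron A B + kron A' B) $$ (i, j)"
    using assms i' j' by (simp add: algebra_simps)
qed (use assms in auto)

lemma kron_add_right: assumes "B \<in> carrier_mat a b" "B' \<in> carrier_mat a b"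
  shows "kron A (B + B') = kron A B + kron A B'"
proof (rule eq_matI)
  fix i j assume i: "i < dim_row (kron A B + kron A B')" and j: "j < dim_col (kron A B + kron A B')"
  then have i': "i < dim_row A * a" and j': "j < dim_col A * b" using assms by auto
  have "i mod a < a" "j mod b < b" using i' j' by auto
  then show "kron A (B + B') $$ (i, j) = (kron A B + kron A B') $$ (i, j)"
    using assms i' j' by (simp add: algebra_simps)
qed (use assms in auto)

lemma kron_smult_left: "kron (x \<cdot>\<^sub>m A) B = x \<cdot>\<^sub>m kron A B"
proof (rule eq_matI)
  fix i j assume i: "i < dim_row (x \<cdot>\<^sub>m kron A B)" and j: "j < dim_col (x \<cdot>\<^sub>m kron A B)"
  then have i': "i < dim_row A * dim_row B" and j': "j < dim_col A * dim_col B" by auto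
  have "i div dim_row B < dim_row A" "j div dim_col B < dim_col A" using i' j' by auto
  then show "kron (x \<cdot>\<^sub>m A) B $$ (i, j) = (x \<cdot>\<^sub>m kron A B) $$ (i, j)"
    using i' j' by (simp add: algebra_simps)
qed auto

lemma kron_smult_right: "kron A (x \<cdot>\<^sub>m B) = x \<cdot>\<^sub>m kron A B"
proof (rule eq_matI)
  fix i j assume i: "i < dim_row (x \<cdot>\<^sub>m kron A B)" and j: "j < dim_col (x \<cdot>\<^sub>m kron A B)"
  then have i': "i < dim_row A * dim_row B" and j': "j < dim_col A * dim_col B" by auto
  have "i mod dim_row B < dim_row B" "j mod dim_col B < dim_col B" using i' j' by auto
  then show "kron A (x \<cdot>\<^sub>m B) $$ (i, j) = (x \<cdot>\<^sub>m kron A B) $$ (i, j)"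
    using i' j' by (simp add: algebra_simps)
qed auto

lemma kron_one: "n > 0 \<Longrightarrow> kron (1\<^sub>m m) (1\<^sub>m n) = 1\<^sub>m (m * n)"
proof (rule eq_matI)
  fix i j assume n: "n > 0" and i: "i < dim_row (1\<^sub>m (m * n))" and j: "j < dim_col (1\<^sub>m (m * n))"
  then have i': "i < m*n" and j': "j < m*n" by auto
  have "(i div n = j div n \<and> i mod n = j mod n) = (i = j)"
    by (metis div_mult_mod_eq)
  then show "kron (1\<^sub>m m) (1\<^sub>m n) $$ (i, j) = 1\<^sub>m (m * n) $$ (i, j)"
    using i' j' n by (auto simp: less_mult_imp_div_less)
qed auto

lemma kron_zero_right: "kron A (0\<^sub>m a b) = 0\<^sub>m (dim_row A * a) (dim_col A * b)"
proof (rule eq_matI)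
  fix i j assume i: "i < dim_row (0\<^sub>m (dim_row A * a) (dim_col A * b))" and j: "j < dim_col (0\<^sub>m (dim_row A * a) (dim_col A * b))"
  then have i': "i < dim_row A * a" and j': "j < dim_col A * b" by auto
  have "i mod a < a" "j mod b < b" using i' j' by auto
  then show "kron A (0\<^sub>m a b) $$ (i, j) = 0\<^sub>m (dim_row A * a) (dim_col A * b) $$ (i, j)"
    using i' j' by simp
qed auto

lemma mat2_carrier[simp]: "mat2 a b c e \<in> carrier_mat 2 2"
  unfolding mat2_def mat_of_rows_list_def by (metis mat_carrier list.size(3) list.size(4) one_add_one add_0 Suc_eq_plus1)

lemma mat2_dims[simp]: "dim_row (mat2 a b c e) = 2" "dim_col (mat2 a b c e) = 2"
  by (simp_all add: mat2_def mat_of_rows_list_def)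

lemma mat2_index[simp]: "mat2 a b c e $$ (0,0) = a" "mat2 a b c e $$ (0,1) = b"
  "mat2 a b c e $$ (1,0) = c" "mat2 a b c e $$ (1,1) = e"
  by (simp_all add: mat2_def mat_of_rows_list_def)

lemma mat2_index'[simp]: "mat2 a b c e $$ (0,Suc 0) = b"
  "mat2 a b c e $$ (Suc 0,0) = c" "mat2 a b c e $$ (Suc 0,Suc 0) = e"
  by (simp_all add: mat2_def mat_of_rows_list_def)

lemma less2: "(i::nat) < 2 \<Longrightarrow> i = 0 \<or> i = 1" by auto

lemma mat2_eqI: "A \<in> carrier_mat 2 2 \<Longrightarrow> A $$ (0,0) = a \<Longrightarrow> A $$ (0,1) = b \<Longrightarrow> A $$ (1,0) = c \<Longrightarrow> A $$ (1,1) = e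
   \<Longrightarrow> A = mat2 a b c e"
  by (rule eq_matI) (auto dest!: less2)

lemma mat2_mult[simp]: "mat2 a b c e * mat2 a' b' c' e' = mat2 (a*a'+b*c') (a*b'+b*e') (c*a'+e*c') (c*b'+e*e')"
  by (rule mat2_eqI) (auto simp: scalar_prod_def row_def col_def numeral_2_eq_2)

lemma mat2_add[simp]: "mat2 a b c e + mat2 a' b' c' e' = mat2 (a+a') (b+b') (c+c') (e+e')"
  by (rule mat2_eqI) auto

lemma mat2_smult[simp]: "x \<cdot>\<^sub>m mat2 a b c e = mat2 (x*a) (x*b) (x*c) (x*e)"
  by (rule mat2_eqI) auto

lemma mat2_uminus[simp]: "- mat2 a b c e = mat2 (-a) (-b) (-c) (-e)"
  by (rule mat2_eqI) auto

lemma mat2_transpose[simp]: "transpose_mat (mat2 a b c e) = mat2 a c b e"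
  by (rule mat2_eqI) auto

lemma mat2_one: "1\<^sub>m 2 = mat2 1 0 0 1"
  by (rule mat2_eqI) auto

lemma mat2_zero: "0\<^sub>m 2 2 = mat2 0 0 0 0"
  by (rule mat2_eqI) auto

lemma mat2_eq_iff[simp]: "mat2 a b c e = mat2 a' b' c' e' \<longleftrightarrow> a = a' \<and> b = b' \<and> c = c' \<and> e = e'"
  by (metis mat2_index)


definition "s3 = mat2 (-1) 0 0 1"
definition "s1 = mat2 0 1 1 0"
definition "sy = mat2 0 (-\<i>) \<i> 0"
definition "e1 = mat2 0 1 (-1) 0"

lemma sm_carrier[simp]: "s3 \<in> carrier_mat 2 2" "s1 \<in> carrier_mat 2 2" "sy \<in> carrier_mat 2 2" "e1 \<in> carrier_mat 2 2"
  by (simp_all add: s3_def s1_def sy_def e1_def)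

lemma one2_carrier[simp]: "1\<^sub>m 2 \<in> carrier_mat 2 2" by simp

lemma smult_smult_mat: "a \<cdot>\<^sub>m (b \<cdot>\<^sub>m A) = (a * b) \<cdot>\<^sub>m (A :: 'a::semigroup_mult mat)"
  by (rule eq_matI) (auto simp: mult.assoc)

lemma gamma_even_carrier[simp]: "gamma_even k j \<in> carrier_mat (2^k) (2^k)"
proof (induction k j rule: gamma_even.induct)
  case (1 j)
  then show ?case by simp
next
  case (2 j)
  then show ?case by simp
next
  case (3 k j)
  have c: "2 ^ Suc (Suc k) = 2 ^ Suc k * (2::nat)" by simp
  show ?case unfolding gamma_even.simps(3) c
    using 3 kron_carrier[OF 3(1) mat2_carrier] kron_carrier[OF one_carrier_mat[of "2^Suc k"] mat2_carrier]
    by simp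
qed

lemma ge_Suc: "k \<ge> 1 \<Longrightarrow> gamma_even (Suc k) j =
  (if j \<le> 2 * k then kron (gamma_even k j) s3 else if j = 2 * k + 1 then kron (1\<^sub>m (2^k)) s1
   else kron (1\<^sub>m (2^k)) sy)"
  by (cases k) (auto simp: s3_def s1_def sy_def)

lemma ge_1: "gamma_even (Suc 0) j = (if j = 1 then e1 else s1)"
  by (simp add: e1_def s1_def)

lemma mpl_carrier: "(\<forall>A\<in>set xs. A \<in> carrier_mat N N) \<Longrightarrow> mat_prod_list N xs \<in> carrier_mat N N"
  by (induction xs) (auto simp: mat_prod_list_def)

lemma mpl_append: "(\<forall>A\<in>set xs. A \<in> carrier_mat N N) \<Longrightarrow> (\<forall>A\<in>set ys. A \<in> carrier_mat N N) \<Longrightarrow>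
  mat_prod_list N (xs @ ys) = mat_prod_list N xs * mat_prod_list N ys"
proof (induction xs)
  case Nil
  then show ?case using mpl_carrier[of ys N] by (simp add: mat_prod_list_def)
next
  case (Cons a xs)
  then have "mat_prod_list N (a # xs @ ys) = a * (mat_prod_list N xs * mat_prod_list N ys)"
    by (simp add: mat_prod_list_def)
  also have "\<dots> = (a * mat_prod_list N xs) * mat_prod_list N ys"
    using Cons mpl_carrier[of xs N] mpl_carrier[of ys N] by (simp add: assoc_mult_mat[symmetric, of a N N])
  finally show ?case by (simp add: mat_prod_list_def)
qed

lemma s3s3: "s3 * s3 = 1\<^sub>m 2" by (simp add: s3_def mat2_one)

lemma mpl_kron_s3:
  "(\<forall>A\<in>set xs. A \<in> carrier_mat N N) \<Longrightarrow>
   mat_prod_list (N*2) (map (\<lambda>A. kron A s3) xs) = kron (mat_prod_list N xs) (if even (length xs) then 1\<^sub>m 2 else s3)"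
proof (induction xs)
  case Nil
  then show ?case by (simp add: mat_prod_list_def kron_one)
next
  case (Cons a xs)
  have a: "a \<in> carrier_mat N N" and xs: "\<forall>A\<in>set xs. A \<in> carrier_mat N N" using Cons.prems by auto
  have X: "(if even (length xs) then 1\<^sub>m 2 else s3) \<in> carrier_mat 2 2" by simp
  have "mat_prod_list (N*2) (map (\<lambda>A. kron A s3) (a # xs)) = kron a s3 * kron (mat_prod_list N xs) (if even (length xs) then 1\<^sub>m 2 else s3)"
    using Cons.IH[OF xs] by (simp add: mat_prod_list_def)
  also have "\<dots> = kron (a * mat_prod_list N xs) (s3 * (if even (length xs) then 1\<^sub>m 2 else s3))"
    by (rule kron_mult[OF a sm_carrier(1) mpl_carrier[OF xs] X]) simp
  also have "s3 * (if even (length xs) then 1\<^sub>m 2 else s3) = (if even (length (a#xs)) then 1\<^sub>m 2 else s3)"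
    by (simp add: s3s3 s3_def mat2_one)
  finally show ?case by (simp add: mat_prod_list_def)
qed

lemma gamma_top_carrier[simp]: "gamma_top k \<in> carrier_mat (2^k) (2^k)"
  unfolding gamma_top_def by (rule smult_carrier_mat, rule mpl_carrier) auto

lemma gamma_top_1: "gamma_top 1 = s3"
  by (simp add: gamma_top_def mat_prod_list_def upt_rec s3_def mat2_one)

lemma gamma_top_Suc: assumes k: "k \<ge> 1" shows "gamma_top (Suc k) = kron (gamma_top k) s3"
proof -
  let ?N = "2^k::nat"
  have e: "2 * Suc k + 1 = Suc (Suc (2*k+1))" by simp
  have up: "[1..<2 * Suc k + 1] = [1..<2*k+1] @ [2*k+1, 2*k+2]"
    unfolding e by (simp only: upt_Suc_append[of 1] le_add2 le_SucI append_assoc) simp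
  have m: "map (gamma_even (Suc k)) [1..<2 * Suc k + 1] =
     map (\<lambda>A. kron A s3) (map (gamma_even k) [1..<2*k+1]) @ [kron (1\<^sub>m ?N) s1, kron (1\<^sub>m ?N) sy]"
    unfolding up using k by (simp add: ge_Suc)
  have c1: "\<forall>A\<in>set (map (\<lambda>A. kron A s3) (map (gamma_even k) [1..<2*k+1])). A \<in> carrier_mat (?N*2) (?N*2)"
    using kron_carrier[OF gamma_even_carrier sm_carrier(1)] by auto
  have c2: "\<forall>A\<in>set [kron (1\<^sub>m ?N) s1, kron (1\<^sub>m ?N) sy]. A \<in> carrier_mat (?N*2) (?N*2)"
    using kron_carrier[OF one_carrier_mat sm_carrier(2)] kron_carrier[OF one_carrier_mat sm_carrier(3)] by auto
  have len: "even (length (map (gamma_even k) [1..<2*k+1]))" by simp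
  have P: "mat_prod_list ?N (map (gamma_even k) [1..<2*k+1]) \<in> carrier_mat ?N ?N"
    by (rule mpl_carrier) auto
  have "mat_prod_list (2 ^ Suc k) (map (gamma_even (Suc k)) [1..<2 * Suc k + 1])
     = mat_prod_list (?N*2) (map (\<lambda>A. kron A s3) (map (gamma_even k) [1..<2*k+1])) * mat_prod_list (?N*2) [kron (1\<^sub>m ?N) s1, kron (1\<^sub>m ?N) sy]"
    unfolding m by (simp only: power_Suc2 mpl_append[OF c1 c2])
  also have "mat_prod_list (?N*2) (map (\<lambda>A. kron A s3) (map (gamma_even k) [1..<2*k+1])) = kron (mat_prod_list ?N (map (gamma_even k) [1..<2*k+1])) (1\<^sub>m 2)"
    using mpl_kron_s3[of "map (gamma_even k) [1..<2*k+1]" ?N] len by auto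
  also have "mat_prod_list (?N*2) [kron (1\<^sub>m ?N) s1, kron (1\<^sub>m ?N) sy] = kron (1\<^sub>m ?N) s1 * (kron (1\<^sub>m ?N) sy * 1\<^sub>m (?N*2))"
    by (simp add: mat_prod_list_def)
  also have "\<dots> = kron (1\<^sub>m ?N) (s1 * sy)"
    using kron_mult[OF one_carrier_mat sm_carrier(2) one_carrier_mat sm_carrier(3)]
      right_mult_one_mat[OF kron_carrier[OF one_carrier_mat sm_carrier(3)], of ?N]
    by simp
  also have "kron (mat_prod_list ?N (map (gamma_even k) [1..<2*k+1])) (1\<^sub>m 2) * kron (1\<^sub>m ?N) (s1 * sy)
      = kron (mat_prod_list ?N (map (gamma_even k) [1..<2*k+1])) (1\<^sub>m 2 * (s1 * sy))"
    using kron_mult[OF P one2_carrier one_carrier_mat mult_carrier_mat[OF sm_carrier(2) sm_carrier(3)]]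
      right_mult_one_mat[OF P] by simp
  also have "1\<^sub>m 2 * (s1 * sy) = (- \<i>) \<cdot>\<^sub>m s3"
    by (simp add: mat2_one s1_def sy_def s3_def)
  finally have "mat_prod_list (2 ^ Suc k) (map (gamma_even (Suc k)) [1..<2 * Suc k + 1]) =
     (- \<i>) \<cdot>\<^sub>m kron (mat_prod_list ?N (map (gamma_even k) [1..<2*k+1])) s3"
    by (simp add: kron_smult_right)
  moreover have "(- (\<i> ^ (Suc k - 1))) * (- \<i>) = - (\<i> ^ (k - 1))"
  proof -
    obtain m where km: "k = Suc m" using k by (cases k) auto
    have "(- (\<i> ^ (Suc k - 1))) * (- \<i>) = \<i> * \<i> * \<i> ^ m" unfolding km by (simp add: algebra_simps)
    also have "\<dots> = - (\<i> ^ (k - 1))" unfolding km by simp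
    finally show ?thesis .
  qed
  ultimately show ?thesis
    unfolding gamma_top_def by (simp add: kron_smult_left smult_smult_mat)
qed

definition cev :: "nat \<Rightarrow> complex mat" where
  "cev k = mat_prod_list (2 ^ k) (map (\<lambda>m. gamma_even k (2 * m)) [2..<k + 1]) * gamma_even k 1"

lemma charge_conj_cev: "charge_conj d = (if d mod 4 = 0 then gamma_top (d div 2) * cev (d div 2) else cev (d div 2))"
  unfolding charge_conj_def cev_def Let_def by simp

lemma cev_carrier[simp]: "cev k \<in> carrier_mat (2^k) (2^k)"
  unfolding cev_def by (rule mult_carrier_mat[OF mpl_carrier]) auto

lemma cev_1: "cev 1 = e1"
  by (simp add: cev_def mat_prod_list_def ge_1 mat2_one e1_def)

definition Mk :: "nat \<Rightarrow> complex mat" where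
  "Mk k = (if odd k then mat2 0 (-\<i>) (-\<i>) 0 else mat2 0 \<i> (-\<i>) 0)"

lemma Mk_carrier[simp]: "Mk k \<in> carrier_mat 2 2" by (simp add: Mk_def)

lemma cev_Suc: assumes k: "k \<ge> 1" shows "cev (Suc k) = kron (cev k) (Mk k)"
proof -
  let ?N = "2^k::nat"
  let ?xs = "map (\<lambda>m. gamma_even k (2 * m)) [2..<k + 1]"
  have up: "[2..<Suc k + 1] = [2..<k+1] @ [k+1]"
    using k by (simp only: Suc_eq_plus1[symmetric] upt_Suc_append)
  have m: "map (\<lambda>m. gamma_even (Suc k) (2 * m)) [2..<Suc k + 1] =
     map (\<lambda>A. kron A s3) ?xs @ [kron (1\<^sub>m ?N) sy]"
    unfolding up using k by (simp add: ge_Suc)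
  have c1: "\<forall>A\<in>set (map (\<lambda>A. kron A s3) ?xs). A \<in> carrier_mat (?N*2) (?N*2)"
    using kron_carrier[OF gamma_even_carrier sm_carrier(1)] by auto
  have c2: "\<forall>A\<in>set [kron (1\<^sub>m ?N) sy]. A \<in> carrier_mat (?N*2) (?N*2)"
    using kron_carrier[OF one_carrier_mat sm_carrier(3)] by auto
  have P: "mat_prod_list ?N ?xs \<in> carrier_mat ?N ?N"
    by (rule mpl_carrier) auto
  define X where "X = (if even (length ?xs) then 1\<^sub>m 2 else s3)"
  have X: "X \<in> carrier_mat 2 2" by (simp add: X_def)
  have "mat_prod_list (2 ^ Suc k) (map (\<lambda>m. gamma_even (Suc k) (2 * m)) [2..<Suc k + 1])
     = mat_prod_list (?N*2) (map (\<lambda>A. kron A s3) ?xs) * mat_prod_list (?N*2) [kron (1\<^sub>m ?N) sy]"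
    unfolding m by (simp only: power_Suc2 mpl_append[OF c1 c2])
  also have "mat_prod_list (?N*2) (map (\<lambda>A. kron A s3) ?xs) = kron (mat_prod_list ?N ?xs) X"
    unfolding X_def by (rule mpl_kron_s3) auto
  also have "mat_prod_list (?N*2) [kron (1\<^sub>m ?N) sy] = kron (1\<^sub>m ?N) sy"
    using right_mult_one_mat[OF kron_carrier[OF one_carrier_mat sm_carrier(3)], of ?N] by (simp add: mat_prod_list_def)
  also have "kron (mat_prod_list ?N ?xs) X * kron (1\<^sub>m ?N) sy = kron (mat_prod_list ?N ?xs) (X * sy)"
    using kron_mult[OF P X one_carrier_mat sm_carrier(3)] P by simp
  finally have 1: "mat_prod_list (2 ^ Suc k) (map (\<lambda>m. gamma_even (Suc k) (2 * m)) [2..<Suc k + 1]) = kron (mat_prod_list ?N ?xs) (X * sy)" .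
  have 2: "gamma_even (Suc k) 1 = kron (gamma_even k 1) s3" using k by (simp add: ge_Suc)
  have "cev (Suc k) = kron (mat_prod_list ?N ?xs) (X * sy) * kron (gamma_even k 1) s3"
    unfolding cev_def 1 2 by simp
  also have "\<dots> = kron (mat_prod_list ?N ?xs * gamma_even k 1) (X * sy * s3)"
    by (rule kron_mult[OF P _ gamma_even_carrier sm_carrier(1)]) (auto intro: mult_carrier_mat[OF X])
  also have "X * sy * s3 = Mk k"
    using k by (cases "odd k") (auto simp: X_def Mk_def s3_def sy_def mat2_one)
  finally show ?thesis unfolding cev_def .
qed

definition gam :: "nat \<Rightarrow> nat \<Rightarrow> complex mat" where
  "gam k j = (if j \<le> 2 * k then gamma_even k j else gamma_top k)"

lemma dirac_gam: "dirac d j = gam (d div 2) j"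
  by (simp add: dirac_def gam_def)

lemma gam_carrier[simp]: "gam k j \<in> carrier_mat (2^k) (2^k)"
  by (simp add: gam_def)

lemma gam_Suc: assumes "k \<ge> 1" shows "gam (Suc k) j =
  (if j \<le> 2 * k then kron (gam k j) s3 else if j = 2 * k + 1 then kron (1\<^sub>m (2^k)) s1
   else if j = 2 * k + 2 then kron (1\<^sub>m (2^k)) sy else kron (gam k (2*k+1)) s3)"
  using assms by (simp add: gam_def ge_Suc gamma_top_Suc)

lemma gam_1: "gam 1 1 = e1" "gam 1 2 = s1" "j \<ge> 3 \<Longrightarrow> gam 1 j = s3"
  using gamma_top_1 by (simp_all add: gam_def e1_def s1_def)


definition eta :: "nat \<Rightarrow> nat \<Rightarrow> complex" where
  "eta a b = (if a = b then (if a = 1 then -1 else 1) else 0)"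

lemma transpose_smult: "transpose_mat (c \<cdot>\<^sub>m A) = c \<cdot>\<^sub>m transpose_mat A"
  by (rule eq_matI) auto

lemma smult_one_kron: "n > 0 \<Longrightarrow> kron (c \<cdot>\<^sub>m 1\<^sub>m m) (1\<^sub>m n) = c \<cdot>\<^sub>m 1\<^sub>m (m*n)"
  by (simp add: kron_smult_left kron_one)

lemma zero_smult_one: "0 \<cdot>\<^sub>m (1\<^sub>m n :: complex mat) = 0\<^sub>m n n"
  by (rule eq_matI) auto

lemma ac_oo:
  assumes A: "A \<in> carrier_mat N N" and B: "B \<in> carrier_mat N N"
    and h: "A * B + B * A = c \<cdot>\<^sub>m 1\<^sub>m N"
  shows "kron A s3 * kron B s3 + kron B s3 * kron A s3 = c \<cdot>\<^sub>m 1\<^sub>m (N*2)"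
proof -
  have "kron A s3 * kron B s3 + kron B s3 * kron A s3 = kron (A*B) (s3*s3) + kron (B*A) (s3*s3)"
    using kron_mult[OF A sm_carrier(1) B sm_carrier(1)] kron_mult[OF B sm_carrier(1) A sm_carrier(1)] by simp
  also have "\<dots> = kron (A*B + B*A) (1\<^sub>m 2)"
    unfolding s3s3 using A B by (simp add: kron_add_left[of _ N N])
  also have "\<dots> = c \<cdot>\<^sub>m 1\<^sub>m (N*2)" unfolding h by (simp add: smult_one_kron)
  finally show ?thesis .
qed

lemma ac_on:
  assumes A: "A \<in> carrier_mat N N" and Y: "Y \<in> carrier_mat 2 2" and h: "s3 * Y + Y * s3 = 0\<^sub>m 2 2"
  shows "kron A s3 * kron (1\<^sub>m N) Y + kron (1\<^sub>m N) Y * kron A s3 = 0 \<cdot>\<^sub>m 1\<^sub>m (N*2)"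
proof -
  have "kron A s3 * kron (1\<^sub>m N) Y + kron (1\<^sub>m N) Y * kron A s3 = kron A (s3*Y) + kron A (Y*s3)"
    using kron_mult[OF A sm_carrier(1) one_carrier_mat Y] kron_mult[OF one_carrier_mat Y A sm_carrier(1)] A by simp
  also have "\<dots> = kron A (s3*Y + Y*s3)"
    using kron_add_right[OF mult_carrier_mat[OF sm_carrier(1) Y] mult_carrier_mat[OF Y sm_carrier(1)], of A] by simp
  also have "\<dots> = 0 \<cdot>\<^sub>m 1\<^sub>m (N*2)" unfolding h zero_smult_one kron_zero_right using A by simp
  finally show ?thesis .
qed

lemma ac_nn:
  assumes X: "X \<in> carrier_mat 2 2" and Y: "Y \<in> carrier_mat 2 2" and h: "X * Y + Y * X = c \<cdot>\<^sub>m 1\<^sub>m 2"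
  shows "kron (1\<^sub>m N) X * kron (1\<^sub>m N) Y + kron (1\<^sub>m N) Y * kron (1\<^sub>m N) X = c \<cdot>\<^sub>m 1\<^sub>m (N*2)"
proof -
  have "kron (1\<^sub>m N) X * kron (1\<^sub>m N) Y + kron (1\<^sub>m N) Y * kron (1\<^sub>m N) X = kron (1\<^sub>m N) (X*Y) + kron (1\<^sub>m N) (Y*X)"
    using kron_mult[OF one_carrier_mat X one_carrier_mat Y] kron_mult[OF one_carrier_mat Y one_carrier_mat X] by simp
  also have "\<dots> = kron (1\<^sub>m N) (X*Y + Y*X)"
    using kron_add_right[OF mult_carrier_mat[OF X Y] mult_carrier_mat[OF Y X], of "1\<^sub>m N"] by simp
  also have "\<dots> = c \<cdot>\<^sub>m 1\<^sub>m (N*2)" unfolding h by (simp add: kron_smult_right kron_one)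
  finally show ?thesis .
qed

lemma ac_sym: "A \<in> carrier_mat N N \<Longrightarrow> B \<in> carrier_mat N N \<Longrightarrow> A * B + B * A = c \<Longrightarrow> B * A + A * B = c"
  by (metis comm_add_mat mult_carrier_mat)

lemma eta_sym: "eta a b = eta b a" by (simp add: eta_def)

lemma cliff:
  assumes k: "k \<ge> 1" and a: "a \<in> {1..2*k+1}" and b: "b \<in> {1..2*k+1}"
  shows "gam k a * gam k b + gam k b * gam k a = (2 * eta a b) \<cdot>\<^sub>m 1\<^sub>m (2^k)"
  using k a b
proof (induction k arbitrary: a b rule: nat_induct_at_least)
  case base
  then have "a = 1 \<or> a = 2 \<or> a = 3" "b = 1 \<or> b = 2 \<or> b = 3" by auto
  then show ?case
    using gam_1 by (auto simp: eta_def e1_def s1_def s3_def mat2_one)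
next
  case (Suc k)
  let ?N = "2^k::nat"
  define oi where "oi a = (if a \<le> 2*k then a else 2*k+1)" for a
  have gs: "2 ^ Suc k = ?N * 2" by simp
  have old: "gam (Suc k) a = kron (gam k (oi a)) s3 \<and> oi a \<in> {1..2*k+1}" if "a \<in> {1..2*Suc k+1}" "a \<noteq> 2*k+1" "a \<noteq> 2*k+2" for a
    using that Suc.hyps unfolding oi_def by (auto simp: gam_Suc)
  have eo: "eta (oi a) (oi b) = eta a b" if "a \<in> {1..2*Suc k+1}" "a \<noteq> 2*k+1" "a \<noteq> 2*k+2"
    "b \<in> {1..2*Suc k+1}" "b \<noteq> 2*k+1" "b \<noteq> 2*k+2" for a b
    using that Suc.hyps unfolding oi_def eta_def by auto
  have n1: "gam (Suc k) (2*k+1) = kron (1\<^sub>m ?N) s1" and n2: "gam (Suc k) (2*k+2) = kron (1\<^sub>m ?N) sy"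
    using Suc.hyps by (auto simp: gam_Suc)
  have hs1: "s3 * s1 + s1 * s3 = 0\<^sub>m 2 2" and hsy: "s3 * sy + sy * s3 = 0\<^sub>m 2 2"
    by (simp_all add: s3_def s1_def sy_def mat2_zero)
  have h11: "s1 * s1 + s1 * s1 = (2 * 1) \<cdot>\<^sub>m 1\<^sub>m 2" and hyy: "sy * sy + sy * sy = (2 * 1) \<cdot>\<^sub>m 1\<^sub>m 2"
    and h1y: "s1 * sy + sy * s1 = (2 * 0) \<cdot>\<^sub>m 1\<^sub>m 2" and hy1: "sy * s1 + s1 * sy = (2 * 0) \<cdot>\<^sub>m 1\<^sub>m 2"
    by (simp_all add: s1_def sy_def mat2_one)
  have e11: "eta (2*k+1) (2*k+1) = 1" "eta (2*k+2) (2*k+2) = 1" "eta (2*k+1) (2*k+2) = 0" "eta (2*k+2) (2*k+1) = 0"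
    using Suc.hyps by (auto simp: eta_def)
  have eon: "eta a c = 0" if "a \<noteq> 2*k+1" "a \<noteq> 2*k+2" "c = 2*k+1 \<or> c = 2*k+2" for a c
    using that by (auto simp: eta_def)
  have C1: "kron (1\<^sub>m ?N) s1 \<in> carrier_mat (?N*2) (?N*2)" "kron (1\<^sub>m ?N) sy \<in> carrier_mat (?N*2) (?N*2)"
    by (auto intro: kron_carrier)
  show ?case
  proof (cases "a = 2*k+1 \<or> a = 2*k+2")
    case True
    note aT = True
    show ?thesis
    proof (cases "b = 2*k+1 \<or> b = 2*k+2")
      case True
      then show ?thesis using aT unfolding gs
        by (elim disjE) (simp_all only: n1 n2 e11 ac_nn[OF sm_carrier(2) sm_carrier(2) h11] ac_nn[OF sm_carrier(3) sm_carrier(3) hyy]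
           ac_nn[OF sm_carrier(2) sm_carrier(3) h1y] ac_nn[OF sm_carrier(3) sm_carrier(2) hy1])
    next
      case False
      then have ob: "gam (Suc k) b = kron (gam k (oi b)) s3" using old Suc.prems by blast
      have "gam (Suc k) b * gam (Suc k) a + gam (Suc k) a * gam (Suc k) b = 0 \<cdot>\<^sub>m 1\<^sub>m (?N*2)"
        using aT unfolding ob by (elim disjE) (simp_all only: n1 n2 ac_on[OF gam_carrier sm_carrier(2) hs1] ac_on[OF gam_carrier sm_carrier(3) hsy])
      then have "gam (Suc k) a * gam (Suc k) b + gam (Suc k) b * gam (Suc k) a = 0 \<cdot>\<^sub>m 1\<^sub>m (?N*2)"
        by (rule ac_sym[OF gam_carrier gam_carrier, unfolded gs])
      moreover have "eta a b = 0" using eon[of b a] False aT by (simp add: eta_sym)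
      ultimately show ?thesis unfolding gs by simp
    qed
  next
    case False
    then have oa: "gam (Suc k) a = kron (gam k (oi a)) s3" and oa': "oi a \<in> {1..2*k+1}" using old Suc.prems by blast+
    show ?thesis
    proof (cases "b = 2*k+1 \<or> b = 2*k+2")
      case True
      have "gam (Suc k) a * gam (Suc k) b + gam (Suc k) b * gam (Suc k) a = 0 \<cdot>\<^sub>m 1\<^sub>m (?N*2)"
        using True unfolding oa by (elim disjE) (simp_all only: n1 n2 ac_on[OF gam_carrier sm_carrier(2) hs1] ac_on[OF gam_carrier sm_carrier(3) hsy])
      moreover have "eta a b = 0" using eon[of a b] False True by simp
      ultimately show ?thesis unfolding gs by simp
    next
      case bF: False
      then have ob: "gam (Suc k) b = kron (gam k (oi b)) s3" and ob': "oi b \<in> {1..2*k+1}" using old Suc.prems by blast+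
      have "gam k (oi a) * gam k (oi b) + gam k (oi b) * gam k (oi a) = (2 * eta (oi a) (oi b)) \<cdot>\<^sub>m 1\<^sub>m ?N"
        by (rule Suc.IH[OF oa' ob'])
      then have "gam (Suc k) a * gam (Suc k) b + gam (Suc k) b * gam (Suc k) a = (2 * eta (oi a) (oi b)) \<cdot>\<^sub>m 1\<^sub>m (?N*2)"
        unfolding oa ob by (rule ac_oo[OF gam_carrier gam_carrier])
      then show ?thesis unfolding gs using eo[of a b] Suc.prems False bF by simp
    qed
  qed
qed


lemma neg1_pow_Suc: "(-1::complex) ^ Suc k = (if odd k then 1 else -1)"
  by (simp)

lemma Mk_s3: "s3 * Mk k = (-1) \<cdot>\<^sub>m (Mk k * s3)"
  by (simp add: Mk_def s3_def)

lemma Mk_s1: "transpose_mat s1 * Mk k = (-1::complex) ^ Suc k \<cdot>\<^sub>m (Mk k * s1)"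
  by (cases "odd k") (simp_all add: Mk_def s1_def neg1_pow_Suc del: power_Suc)

lemma Mk_sy: "transpose_mat sy * Mk k = (-1::complex) ^ Suc k \<cdot>\<^sub>m (Mk k * sy)"
  by (cases "odd k") (simp_all add: Mk_def sy_def neg1_pow_Suc del: power_Suc)

lemma s3_T: "transpose_mat s3 = s3" by (simp add: s3_def)

lemma kron_transpose_mult:
  assumes G: "G \<in> carrier_mat N N" and C: "C \<in> carrier_mat N N" and X: "X \<in> carrier_mat 2 2" and M: "M \<in> carrier_mat 2 2"
  shows "transpose_mat (kron G X) * kron C M = kron (transpose_mat G * C) (transpose_mat X * M)"
  unfolding kron_transpose by (rule kron_mult) (use G C X M in auto)

lemma ctr:
  assumes k: "k \<ge> 1" and a: "a \<in> {1..2*k+1}"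
  shows "transpose_mat (gam k a) * cev k = (-1) ^ k \<cdot>\<^sub>m (cev k * gam k a)"
  using k a
proof (induction k arbitrary: a rule: nat_induct_at_least)
  case base
  then have "a = 1 \<or> a = 2 \<or> a = 3" by auto
  then show ?case
    using gam_1 cev_1 by (auto simp: e1_def s1_def s3_def)
next
  case (Suc k)
  let ?N = "2^k::nat"
  define oi where "oi a = (if a \<le> 2*k then a else 2*k+1)" for a
  let ?C = "cev k" and ?M = "Mk k"
  have cS: "cev (Suc k) = kron ?C ?M" using cev_Suc[OF Suc.hyps] .
  show ?case
  proof (cases "a = 2*k+1 \<or> a = 2*k+2")
    case True
    then obtain X where gX: "gam (Suc k) a = kron (1\<^sub>m ?N) X" and X: "X \<in> carrier_mat 2 2"
      and hX: "transpose_mat X * ?M = (-1::complex) ^ Suc k \<cdot>\<^sub>m (?M * X)"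
      using Suc.hyps Mk_s1 Mk_sy by (auto simp: gam_Suc)
    have "transpose_mat (gam (Suc k) a) * cev (Suc k) = kron (transpose_mat (1\<^sub>m ?N) * ?C) (transpose_mat X * ?M)"
      unfolding gX cS by (rule kron_transpose_mult[OF one_carrier_mat cev_carrier X Mk_carrier])
    also have "\<dots> = kron ?C ((-1::complex) ^ Suc k \<cdot>\<^sub>m (?M * X))" unfolding hX
      using left_mult_one_mat[OF cev_carrier[of k]] by simp
    also have "\<dots> = (-1) ^ Suc k \<cdot>\<^sub>m kron (?C * 1\<^sub>m ?N) (?M * X)"
      using right_mult_one_mat[OF cev_carrier[of k]] by (simp add: kron_smult_right)
    also have "kron (?C * 1\<^sub>m ?N) (?M * X) = cev (Suc k) * gam (Suc k) a"
      unfolding gX cS by (rule kron_mult[symmetric, OF cev_carrier Mk_carrier one_carrier_mat X]) simp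
    finally show ?thesis .
  next
    case False
    then have gO: "gam (Suc k) a = kron (gam k (oi a)) s3" and oa: "oi a \<in> {1..2*k+1}"
      using Suc.prems Suc.hyps unfolding oi_def by (auto simp: gam_Suc)
    let ?G = "gam k (oi a)"
    have "transpose_mat (gam (Suc k) a) * cev (Suc k) = kron (transpose_mat ?G * ?C) (transpose_mat s3 * ?M)"
      unfolding gO cS by (rule kron_transpose_mult[OF gam_carrier cev_carrier sm_carrier(1) Mk_carrier])
    also have "\<dots> = kron ((-1) ^ k \<cdot>\<^sub>m (?C * ?G)) ((-1) \<cdot>\<^sub>m (?M * s3))"
      unfolding Suc.IH[OF oa] s3_T Mk_s3 ..
    also have "\<dots> = ((-1) ^ k * (-1)) \<cdot>\<^sub>m kron (?C * ?G) (?M * s3)"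
      by (simp add: kron_smult_right kron_smult_left smult_smult_mat)
    also have "kron (?C * ?G) (?M * s3) = cev (Suc k) * gam (Suc k) a"
      unfolding gO cS by (rule kron_mult[symmetric, OF cev_carrier Mk_carrier gam_carrier sm_carrier(1)]) simp
    finally show ?thesis by simp
  qed
qed

definition sig :: "nat \<Rightarrow> complex" where
  "sig k = (if k mod 4 \<in> {0, 3} then 1 else -1)"

lemma Mk_T: "transpose_mat (Mk k) = (if odd k then 1 else -1) \<cdot>\<^sub>m Mk k"
  by (simp add: Mk_def)

lemma sig_Suc: "sig (Suc k) = sig k * (if odd k then 1 else -1)"
proof -
  have "k mod 4 = 0 \<or> k mod 4 = 1 \<or> k mod 4 = 2 \<or> k mod 4 = 3" by auto
  moreover have "odd k \<longleftrightarrow> k mod 4 = 1 \<or> k mod 4 = 3"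
    by presburger
  moreover have "Suc k mod 4 = (if k mod 4 = 3 then 0 else Suc (k mod 4))"
    by (simp add: mod_Suc)
  ultimately show ?thesis by (auto simp: sig_def)
qed

lemma cev_T: "k \<ge> 1 \<Longrightarrow> transpose_mat (cev k) = sig k \<cdot>\<^sub>m cev k"
proof (induction k rule: nat_induct_at_least)
  case base
  then show ?case using cev_1 by (simp add: e1_def sig_def)
next
  case (Suc k)
  show ?case unfolding cev_Suc[OF Suc.hyps] kron_transpose Suc.IH Mk_T sig_Suc
    by (simp add: kron_smult_left kron_smult_right smult_smult_mat mult.commute)
qed

lemma gamma_top_T: "k \<ge> 1 \<Longrightarrow> transpose_mat (gamma_top k) = gamma_top k"
proof (induction k rule: nat_induct_at_least)
  case base
  then show ?case using gamma_top_1 by (simp add: s3_def)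
next
  case (Suc k)
  then show ?case by (simp add: gamma_top_Suc kron_transpose s3_T)
qed


lemma half_smult: assumes "X \<in> carrier_mat n n" "X + X = (2 * c) \<cdot>\<^sub>m 1\<^sub>m n"
  shows "X = (c::complex) \<cdot>\<^sub>m 1\<^sub>m n"
proof (rule eq_matI)
  fix i j assume i: "i < dim_row (c \<cdot>\<^sub>m 1\<^sub>m n)" and j: "j < dim_col (c \<cdot>\<^sub>m 1\<^sub>m n)"
  then have ij: "i < n" "j < n" using assms by auto
  have e1: "(X + X) $$ (i,j) = X $$ (i,j) + X $$ (i,j)" using ij assms(1) by simp
  have e2: "((2 * c) \<cdot>\<^sub>m 1\<^sub>m n) $$ (i,j) = 2 * c * (if i = j then 1 else 0)" using ij by simp
  have "(X + X) $$ (i,j) = ((2 * c) \<cdot>\<^sub>m 1\<^sub>m n) $$ (i,j)" using assms(2) by (rule arg_cong)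
  then have "2 * X $$ (i,j) = 2 * (c * (if i = j then 1 else 0))" unfolding e1 e2 by simp
  then have "X $$ (i,j) = c * (if i = j then 1 else 0)" by simp
  then show "X $$ (i,j) = (c \<cdot>\<^sub>m 1\<^sub>m n) $$ (i,j)" using ij by simp
qed (use assms in auto)

lemma smult_one_mat[simp]: "(1::complex) \<cdot>\<^sub>m A = A"
  by (rule eq_matI) auto

lemma neg_smult: "- (X :: complex mat) = (-1) \<cdot>\<^sub>m X"
  by (rule eq_matI) auto

lemma add_zero_neg: assumes "X \<in> carrier_mat n m" "Y \<in> carrier_mat n m" "Y + X = 0\<^sub>m n m"
  shows "X = - (Y :: complex mat)"
proof (rule eq_matI)
  fix i j assume i: "i < dim_row (- Y)" and j: "j < dim_col (- Y)"
  then have ij: "i < n" "j < m" using assms by auto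
  have e1: "(Y + X) $$ (i,j) = Y $$ (i,j) + X $$ (i,j)" using ij assms(1,2) by simp
  have "(Y + X) $$ (i,j) = 0\<^sub>m n m $$ (i,j)" using assms(3) by (rule arg_cong)
  then have "Y $$ (i,j) + X $$ (i,j) = 0" unfolding e1 using ij by simp
  then have "X $$ (i,j) = - Y $$ (i,j)" by (simp add: add_eq_0_iff)
  then show "X $$ (i,j) = (- Y) $$ (i,j)" using ij assms by simp
qed (use assms in auto)

locale dset = fixes d :: nat assumes d2: "d \<ge> 2"
begin

abbreviation "k \<equiv> d div 2"
abbreviation "N \<equiv> (2::nat) ^ (d div 2)"
abbreviation "C \<equiv> charge_conj d"
abbreviation "G j \<equiv> dirac d j"

lemma k1: "k \<ge> 1" using d2 by auto

lemma Gc[simp]: "G j \<in> carrier_mat N N" by (simp add: dirac_gam)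

lemma Cc[simp]: "C \<in> carrier_mat N N"
  unfolding charge_conj_cev using mult_carrier_mat[OF gamma_top_carrier cev_carrier, of k] by simp

lemma jrange: "j \<in> {1..d} \<Longrightarrow> j \<in> {1..2*k+1}" by auto

lemma cliffd: "a \<in> {1..d} \<Longrightarrow> b \<in> {1..d} \<Longrightarrow> G a * G b + G b * G a = (2 * eta a b) \<cdot>\<^sub>m 1\<^sub>m N"
  unfolding dirac_gam by (rule cliff[OF k1 jrange jrange])

lemma Gsq: "a \<in> {1..d} \<Longrightarrow> G a * G a = eta a a \<cdot>\<^sub>m 1\<^sub>m N"
  by (rule half_smult[OF mult_carrier_mat[OF Gc Gc] cliffd]) auto

definition eps :: complex where "eps = (if even d then -1 else (-1) ^ k)"

lemma CT: "transpose_mat C = sig k \<cdot>\<^sub>m C"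
proof (cases "d mod 4 = 0")
  case False
  then show ?thesis unfolding charge_conj_cev using cev_T[OF k1] by simp
next
  case True
  let ?T = "gamma_top k" and ?E = "cev k"
  have ke: "even k" using True by presburger
  have T: "?T \<in> carrier_mat N N" and E: "?E \<in> carrier_mat N N" by auto
  have "transpose_mat ?T * ?E = (-1)^k \<cdot>\<^sub>m (?E * gam k (2*k+1))"
    using ctr[OF k1, of "2*k+1"] by (simp add: gam_def)
  then have com: "?T * ?E = ?E * ?T" using ke gamma_top_T[OF k1] by (simp add: gam_def)
  have "transpose_mat (?T * ?E) = transpose_mat ?E * transpose_mat ?T"
    by (rule transpose_mult[OF T E])
  also have "\<dots> = (sig k \<cdot>\<^sub>m ?E) * ?T" unfolding cev_T[OF k1] gamma_top_T[OF k1] ..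
  also have "\<dots> = sig k \<cdot>\<^sub>m (?E * ?T)" by (rule mult_smult_assoc_mat[OF E T])
  finally show ?thesis unfolding charge_conj_cev using True com by simp
qed

lemma ctrd: assumes a: "a \<in> {1..d}" shows "transpose_mat (G a) * C = eps \<cdot>\<^sub>m (C * G a)"
proof (cases "d mod 4 = 0")
  case False
  have "transpose_mat (G a) * cev k = (-1)^k \<cdot>\<^sub>m (cev k * G a)"
    unfolding dirac_gam by (rule ctr[OF k1 jrange[OF a]])
  moreover have "even d \<Longrightarrow> odd k" using False by presburger
  ultimately show ?thesis unfolding charge_conj_cev eps_def using False by auto
next
  case True
  let ?T = "gamma_top k" and ?E = "cev k" and ?A = "G a"
  have ke: "even k" and de: "even d" using True by presburger+
  have T: "?T \<in> carrier_mat N N" and E: "?E \<in> carrier_mat N N" and A: "?A \<in> carrier_mat N N" by auto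
  have ad: "a \<le> 2*k" using a de by auto
  have "?A * G (2*k+1) + G (2*k+1) * ?A = (2 * eta a (2*k+1)) \<cdot>\<^sub>m 1\<^sub>m N"
    unfolding dirac_gam by (rule cliff[OF k1]) (use a in auto)
  then have ac: "?A * ?T + ?T * ?A = 0\<^sub>m N N"
    using ad by (simp add: dirac_gam gam_def eta_def zero_smult_one)
  have "transpose_mat (?A * ?T + ?T * ?A) = transpose_mat ?T * transpose_mat ?A + transpose_mat ?A * transpose_mat ?T"
    using transpose_add[OF mult_carrier_mat[OF A T] mult_carrier_mat[OF T A]] transpose_mult[OF A T] transpose_mult[OF T A]
    by simp
  then have "?T * transpose_mat ?A + transpose_mat ?A * ?T = 0\<^sub>m N N"
    unfolding ac gamma_top_T[OF k1] by simp
  then have sw: "transpose_mat ?A * ?T = - (?T * transpose_mat ?A)"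
    by (rule add_zero_neg[OF mult_carrier_mat[OF transpose_carrier_mat[THEN iffD2, OF A] T] mult_carrier_mat[OF T transpose_carrier_mat[THEN iffD2, OF A]]])
  have ctrA: "transpose_mat ?A * ?E = (-1)^k \<cdot>\<^sub>m (?E * ?A)"
    unfolding dirac_gam by (rule ctr[OF k1 jrange[OF a]])
  have At: "transpose_mat ?A \<in> carrier_mat N N" using A by simp
  have "transpose_mat ?A * (?T * ?E) = (transpose_mat ?A * ?T) * ?E"
    by (rule assoc_mult_mat[symmetric, OF At T E])
  also have "\<dots> = - (?T * transpose_mat ?A) * ?E" unfolding sw ..
  also have "\<dots> = - (?T * (transpose_mat ?A * ?E))"
  proof -
    have "dim_col (?T * transpose_mat ?A) = dim_row ?E" using carrier_matD[OF A] carrier_matD[OF E] by simp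
    from uminus_mult_left_mat[OF this] show ?thesis using assoc_mult_mat[OF T At E] by simp
  qed
  also have "\<dots> = - (?T * ((-1)^k \<cdot>\<^sub>m (?E * ?A)))" unfolding ctrA ..
  also have "\<dots> = - (?T * (?E * ?A))" using ke by simp
  also have "\<dots> = (-1) \<cdot>\<^sub>m ((?T * ?E) * ?A)"
    using assoc_mult_mat[OF T E A] by (simp add: neg_smult)
  finally show ?thesis unfolding charge_conj_cev eps_def using True de by simp
qed

end


lemma sq_expand:
  assumes A: "A \<in> carrier_mat n n" and B: "B \<in> carrier_mat n n"
  shows "(A + B) * (A + B) = A * A + (A * B + B * A) + B * B"
proof -
  have "(A + B) * (A + B) = A * (A + B) + B * (A + B)"
    by (rule add_mult_distrib_mat[OF A B add_carrier_mat[OF B]])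
  also have "\<dots> = (A * A + A * B) + (B * A + B * B)"
    using mult_add_distrib_mat[OF A A B] mult_add_distrib_mat[OF B A B] by simp
  also have "\<dots> = A * A + (A * B + B * A) + B * B"
    using A B by (simp add: assoc_add_mat[of _ n n])
  finally show ?thesis .
qed

lemma smult_mult_vec: "(A :: complex mat) \<in> carrier_mat nr nc \<Longrightarrow> v \<in> carrier_vec nc \<Longrightarrow> (c \<cdot>\<^sub>m A) *\<^sub>v v = c \<cdot>\<^sub>v (A *\<^sub>v v)"
proof (rule eq_vecI)
  fix i assume A: "A \<in> carrier_mat nr nc" and v: "v \<in> carrier_vec nc" and i: "i < dim_vec (c \<cdot>\<^sub>v (A *\<^sub>v v))"
  then have i': "i < nr" by auto
  have "dim_vec (row A i) = dim_vec v" using A v by auto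
  from scalar_prod_smult_left[OF this, of c]
  show "((c \<cdot>\<^sub>m A) *\<^sub>v v) $ i = (c \<cdot>\<^sub>v (A *\<^sub>v v)) $ i"
    using A i' by simp
qed auto

lemma mult_zero_vec: "A \<in> carrier_mat nr nc \<Longrightarrow> A *\<^sub>v 0\<^sub>v nc = 0\<^sub>v nr"
  by (rule eq_vecI) auto

lemma add4: assumes "a \<in> carrier_mat n m" "b \<in> carrier_mat n m" "c \<in> carrier_mat n m" "e \<in> carrier_mat n m"
  shows "(a + b) + (c + e) = (a + c) + (b + (e :: complex mat))"
  by (rule eq_matI) (use assms in auto)

lemma zero_T: "transpose_mat (0\<^sub>m n m) = 0\<^sub>m m n" by (rule eq_matI) auto

lemma zero_mult_vec: "v \<in> carrier_vec nc \<Longrightarrow> 0\<^sub>m nr nc *\<^sub>v v = 0\<^sub>v nr"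
  by (rule eq_vecI) (auto simp: scalar_prod_def)

context dset begin

definition Qs :: "(nat \<Rightarrow> complex) \<Rightarrow> nat list \<Rightarrow> complex mat" where
  "Qs c js = foldr (+) (map (\<lambda>j. c j \<cdot>\<^sub>m G j) js) (0\<^sub>m N N)"

lemma Qs_Nil[simp]: "Qs c [] = 0\<^sub>m N N" by (simp add: Qs_def)
lemma Qs_Cons: "Qs c (j # js) = c j \<cdot>\<^sub>m G j + Qs c js" by (simp add: Qs_def)

lemma Qs_carrier[simp]: "Qs c js \<in> carrier_mat N N"
  by (induction js) (auto simp: Qs_Cons)

lemma Qs_T: "set js \<subseteq> {1..d} \<Longrightarrow> transpose_mat (Qs c js) * C = eps \<cdot>\<^sub>m (C * Qs c js)"
proof (induction js)
  case Nil
  then show ?case using left_mult_zero_mat[OF Cc] right_mult_zero_mat[OF Cc] by (simp add: zero_T)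
next
  case (Cons j js)
  let ?Q = "Qs c js" and ?A = "G j"
  have A: "?A \<in> carrier_mat N N" and Q: "?Q \<in> carrier_mat N N" and CC: "C \<in> carrier_mat N N" by auto
  have At: "transpose_mat ?A \<in> carrier_mat N N" and Qt: "transpose_mat ?Q \<in> carrier_mat N N" by auto
  have j: "j \<in> {1..d}" and js: "set js \<subseteq> {1..d}" using Cons.prems by auto
  have "transpose_mat (Qs c (j # js)) = c j \<cdot>\<^sub>m transpose_mat ?A + transpose_mat ?Q"
    unfolding Qs_Cons using transpose_add[OF smult_carrier_mat[OF A] Q] by (simp add: transpose_smult)
  then have "transpose_mat (Qs c (j # js)) * C = (c j \<cdot>\<^sub>m transpose_mat ?A) * C + transpose_mat ?Q * C"
    using add_mult_distrib_mat[OF smult_carrier_mat[OF At] Qt CC] by simp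
  also have "\<dots> = c j \<cdot>\<^sub>m (transpose_mat ?A * C) + transpose_mat ?Q * C"
    using mult_smult_assoc_mat[OF At CC] by simp
  also have "\<dots> = c j \<cdot>\<^sub>m (eps \<cdot>\<^sub>m (C * ?A)) + eps \<cdot>\<^sub>m (C * ?Q)"
    unfolding ctrd[OF j] Cons.IH[OF js] ..
  also have "\<dots> = eps \<cdot>\<^sub>m (c j \<cdot>\<^sub>m (C * ?A) + C * ?Q)"
    using add_smult_distrib_left_mat[OF smult_carrier_mat[OF mult_carrier_mat[OF CC A]] mult_carrier_mat[OF CC Q]]
    by (simp add: smult_smult_mat mult.commute)
  also have "c j \<cdot>\<^sub>m (C * ?A) + C * ?Q = C * Qs c (j # js)"
    unfolding Qs_Cons using mult_add_distrib_mat[OF CC smult_carrier_mat[OF A] Q] mult_smult_distrib[OF CC A] by simp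
  finally show ?case .
qed

lemma Qs_anti: "j \<in> {1..d} \<Longrightarrow> set js \<subseteq> {1..d} \<Longrightarrow> j \<notin> set js \<Longrightarrow> G j * Qs c js + Qs c js * G j = 0\<^sub>m N N"
proof (induction js)
  case Nil
  have "G j * 0\<^sub>m N N = 0\<^sub>m N N" "0\<^sub>m N N * G j = 0\<^sub>m N N"
    using right_mult_zero_mat[OF Gc[of j]] left_mult_zero_mat[OF Gc[of j]] by auto
  then show ?case by simp
next
  case (Cons i js)
  let ?Q = "Qs c js" and ?A = "G j" and ?B = "G i"
  have A: "?A \<in> carrier_mat N N" and Q: "?Q \<in> carrier_mat N N" and B: "?B \<in> carrier_mat N N" by auto
  have i: "i \<in> {1..d}" and js: "set js \<subseteq> {1..d}" and ij: "i \<noteq> j" and jn: "j \<notin> set js" using Cons.prems by auto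
  have IH: "?A * ?Q + ?Q * ?A = 0\<^sub>m N N" using Cons.IH[OF Cons.prems(1) js jn] .
  have ab: "?A * ?B + ?B * ?A = 0\<^sub>m N N"
    using cliffd[OF Cons.prems(1) i] ij by (simp add: eta_def zero_smult_one)
  have "?A * Qs c (i # js) + Qs c (i # js) * ?A = (?A * (c i \<cdot>\<^sub>m ?B) + ?A * ?Q) + ((c i \<cdot>\<^sub>m ?B) * ?A + ?Q * ?A)"
    unfolding Qs_Cons using mult_add_distrib_mat[OF A smult_carrier_mat[OF B] Q] add_mult_distrib_mat[OF smult_carrier_mat[OF B] Q A] by simp
  also have "\<dots> = (c i \<cdot>\<^sub>m (?A * ?B) + ?A * ?Q) + (c i \<cdot>\<^sub>m (?B * ?A) + ?Q * ?A)"
    using mult_smult_distrib[OF A B] mult_smult_assoc_mat[OF B A] by simp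
  also have "\<dots> = (c i \<cdot>\<^sub>m (?A * ?B) + c i \<cdot>\<^sub>m (?B * ?A)) + (?A * ?Q + ?Q * ?A)"
    by (rule add4[OF smult_carrier_mat[OF mult_carrier_mat[OF A B]] mult_carrier_mat[OF A Q] smult_carrier_mat[OF mult_carrier_mat[OF B A]] mult_carrier_mat[OF Q A]])
  also have "\<dots> = c i \<cdot>\<^sub>m (?A * ?B + ?B * ?A) + (?A * ?Q + ?Q * ?A)"
    using add_smult_distrib_left_mat[OF mult_carrier_mat[OF A B] mult_carrier_mat[OF B A]] by simp
  also have "\<dots> = 0\<^sub>m N N" unfolding ab IH by simp
  finally show ?case .
qed

lemma Qs_sq: "distinct js \<Longrightarrow> set js \<subseteq> {1..d} \<Longrightarrow> Qs c js * Qs c js = (\<Sum>j\<in>set js. c j ^ 2 * eta j j) \<cdot>\<^sub>m 1\<^sub>m N"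
proof (induction js)
  case Nil
  then show ?case by (simp add: zero_smult_one)
next
  case (Cons i js)
  let ?Q = "Qs c js" and ?B = "G i"
  have Q: "?Q \<in> carrier_mat N N" and B: "?B \<in> carrier_mat N N" by auto
  have i: "i \<in> {1..d}" and js: "set js \<subseteq> {1..d}" and dj: "distinct js" and ni: "i \<notin> set js" using Cons.prems by auto
  have "Qs c (i # js) * Qs c (i # js) = (c i \<cdot>\<^sub>m ?B) * (c i \<cdot>\<^sub>m ?B) + ((c i \<cdot>\<^sub>m ?B) * ?Q + ?Q * (c i \<cdot>\<^sub>m ?B)) + ?Q * ?Q"
    unfolding Qs_Cons by (rule sq_expand[OF smult_carrier_mat[OF B] Q])
  also have "(c i \<cdot>\<^sub>m ?B) * (c i \<cdot>\<^sub>m ?B) = (c i ^ 2 * eta i i) \<cdot>\<^sub>m 1\<^sub>m N"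
    using mult_smult_distrib[OF smult_carrier_mat[OF B] B] mult_smult_assoc_mat[OF B B] Gsq[OF i]
    by (simp add: smult_smult_mat power2_eq_square mult.assoc)
  also have "(c i \<cdot>\<^sub>m ?B) * ?Q + ?Q * (c i \<cdot>\<^sub>m ?B) = c i \<cdot>\<^sub>m (?B * ?Q + ?Q * ?B)"
    using mult_smult_distrib[OF Q B] mult_smult_assoc_mat[OF B Q]
      add_smult_distrib_left_mat[OF mult_carrier_mat[OF B Q] mult_carrier_mat[OF Q B]] by simp
  also have "\<dots> = 0\<^sub>m N N" unfolding Qs_anti[OF i js ni] by simp
  also have "?Q * ?Q = (\<Sum>j\<in>set js. c j ^ 2 * eta j j) \<cdot>\<^sub>m 1\<^sub>m N" by (rule Cons.IH[OF dj js])
  finally show ?case using ni Qs_carrier[of c js]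
    by (simp add: add_smult_distrib_right_mat[OF one_carrier_mat, symmetric])
qed

definition cf :: "(nat \<Rightarrow> complex) \<Rightarrow> nat \<Rightarrow> complex" where
  "cf x j = (if j = 1 then - x 1 else x j)"

lemma slashP_Qs: "slashP d x = Qs (cf x) [1..<d+1]"
proof -
  have up: "[1..<d+1] = 1 # [2..<d+1]" using d2 upt_conv_Cons[of 1 "d+1"] by (simp add: numeral_2_eq_2)
  have m: "map (\<lambda>j. cf x j \<cdot>\<^sub>m G j) [2..<d+1] = map (\<lambda>j. x j \<cdot>\<^sub>m G j) [2..<d+1]"
    by (rule map_cong) (auto simp: cf_def)
  have "Qs (cf x) [1..<d+1] = cf x 1 \<cdot>\<^sub>m G 1 + Qs (cf x) [2..<d+1]" unfolding up Qs_Cons ..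
  also have "Qs (cf x) [2..<d+1] = foldr (+) (map (\<lambda>j. x j \<cdot>\<^sub>m G j) [2..<d+1]) (0\<^sub>m N N)"
    unfolding Qs_def m ..
  finally have q: "Qs (cf x) [1..<d+1] = cf x 1 \<cdot>\<^sub>m G 1 + foldr (+) (map (\<lambda>j. x j \<cdot>\<^sub>m G j) [2..<d+1]) (0\<^sub>m N N)" .
  have c1: "cf x 1 = - x 1" by (simp add: cf_def)
  show ?thesis unfolding slashP_def q c1 ..
qed

lemma P_carrier[simp]: "slashP d x \<in> carrier_mat N N"
  unfolding slashP_Qs by simp

lemma P_T: "transpose_mat (slashP d x) * C = eps \<cdot>\<^sub>m (C * slashP d x)"
  unfolding slashP_Qs by (rule Qs_T) auto

lemma P_sq: "slashP d x * slashP d x = mdot d x x \<cdot>\<^sub>m 1\<^sub>m N"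
proof -
  have "slashP d x * slashP d x = (\<Sum>j\<in>{1..d}. cf x j ^ 2 * eta j j) \<cdot>\<^sub>m 1\<^sub>m N"
  proof -
    have st: "set [1..<d+1] = {1..d}" by auto
    show ?thesis unfolding slashP_Qs using Qs_sq[of "[1..<d+1]" "cf x"] unfolding st by simp
  qed
  also have "(\<Sum>j\<in>{1..d}. cf x j ^ 2 * eta j j) = mdot d x x"
  proof -
    have s: "{1..d} = insert 1 {2..d}" using d2 by auto
    have "(\<Sum>j\<in>{1..d}. cf x j ^ 2 * eta j j) = cf x 1 ^ 2 * eta 1 1 + (\<Sum>j\<in>{2..d}. cf x j ^ 2 * eta j j)"
      unfolding s by (subst sum.insert) auto
    also have "(\<Sum>j\<in>{2..d}. cf x j ^ 2 * eta j j) = (\<Sum>j\<in>{2..d}. x j * x j)"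
      by (rule sum.cong) (auto simp: cf_def eta_def power2_eq_square)
    finally show ?thesis by (simp add: mdot_def cf_def eta_def power2_eq_square)
  qed
  finally show ?thesis .
qed

lemma P_null: "mdot d x x = 0 \<Longrightarrow> slashP d x * slashP d x = 0\<^sub>m N N"
  using P_sq by (simp add: zero_smult_one)

lemma Qs_lin: assumes u: "u \<in> carrier_vec N" and w: "w \<in> carrier_vec N"
  shows "u \<bullet> (C *\<^sub>v (Qs c js *\<^sub>v w)) = sum_list (map (\<lambda>j. c j * (u \<bullet> (C *\<^sub>v (G j *\<^sub>v w)))) js)"
proof (induction js)
  case Nil
  then show ?case using u w by (simp add: zero_mult_vec mult_zero_vec[OF Cc])
next
  case (Cons j js)
  let ?Q = "Qs c js" and ?A = "G j"
  have A: "?A \<in> carrier_mat N N" and Q: "?Q \<in> carrier_mat N N" and CC: "C \<in> carrier_mat N N" by auto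
  have Aw: "?A *\<^sub>v w \<in> carrier_vec N" and Qw: "?Q *\<^sub>v w \<in> carrier_vec N"
    using mult_mat_vec_carrier[OF A w] mult_mat_vec_carrier[OF Q w] by auto
  have "Qs c (j # js) *\<^sub>v w = c j \<cdot>\<^sub>v (?A *\<^sub>v w) + ?Q *\<^sub>v w"
    unfolding Qs_Cons using add_mult_distrib_mat_vec[OF smult_carrier_mat[OF A] Q w] smult_mult_vec[OF A w] by simp
  then have "C *\<^sub>v (Qs c (j # js) *\<^sub>v w) = c j \<cdot>\<^sub>v (C *\<^sub>v (?A *\<^sub>v w)) + C *\<^sub>v (?Q *\<^sub>v w)"
    using mult_add_distrib_mat_vec[OF CC smult_carrier_vec[THEN iffD2, OF Aw] Qw] mult_mat_vec[OF CC Aw] by simp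
  then have "u \<bullet> (C *\<^sub>v (Qs c (j # js) *\<^sub>v w)) = c j * (u \<bullet> (C *\<^sub>v (?A *\<^sub>v w))) + u \<bullet> (C *\<^sub>v (?Q *\<^sub>v w))"
    using scalar_prod_add_distrib[OF u smult_carrier_vec[THEN iffD2, OF mult_mat_vec_carrier[OF CC Aw]] mult_mat_vec_carrier[OF CC Qw]] CC Aw u
    by (simp add: mult_mat_vec_carrier)
  then show ?case using Cons.IH by simp
qed

lemma P_lin: assumes u: "u \<in> carrier_vec N" and w: "w \<in> carrier_vec N"
  shows "u \<bullet> (C *\<^sub>v (slashP d x *\<^sub>v w)) = (\<Sum>j\<in>{1..d}. cf x j * (u \<bullet> (C *\<^sub>v (G j *\<^sub>v w))))"
proof -
  have st: "set [1..<d+1] = {1..d}" by auto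
  show ?thesis
    unfolding slashP_Qs Qs_lin[OF u w] sum_set_upt_conv_sum_list_nat[symmetric] st ..
qed

end


lemma (in vectorspace) dim_mono:
  assumes X: "subspace K X V" and Y: "subspace K Y V" and XY: "X \<subseteq> Y"
    and fX: "vectorspace.fin_dim K (vs X)" and fY: "vectorspace.fin_dim K (vs Y)"
  shows "vectorspace.dim K (vs X) \<le> vectorspace.dim K (vs Y)"
proof -
  interpret W: vectorspace K "vs Y" by (rule subspace_is_vs[OF Y])
  have sXV: "submodule K X V" using X by (simp add: subspace_def)
  have "submodule K X (vs Y)"
    unfolding submodule_def using sXV XY W.module_axioms by (auto simp: submodule_def)
  then have "subspace K X (vs Y)"
    unfolding subspace_def using W.vectorspace_axioms by simp
  from W.subspace_dim[OF this fY] fX show ?thesis by simp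
qed

context vec_space begin

lemma mult_in_span: assumes A: "A \<in> carrier_mat n m" and w: "w \<in> carrier_vec m"
  shows "A *\<^sub>v w \<in> span (set (cols A))"
proof -
  have d: "\<forall>v\<in>set (cols A). dim_vec v = n" using cols_dim[of A] A by auto
  have "lincomb_list (\<lambda>i. w $ i) (cols A) = mat_of_cols n (cols A) *\<^sub>v vec (length (cols A)) (\<lambda>i. w $ i)"
    by (rule lincomb_list_as_mat_mult[OF d])
  also have "mat_of_cols n (cols A) = A" using A mat_of_cols_cols[of A] by auto
  also have "vec (length (cols A)) (\<lambda>i. w $ i) = w" using A w by auto
  finally have L: "A *\<^sub>v w = lincomb_list (\<lambda>i. w $ i) (cols A)" by simp
  have "A *\<^sub>v w \<in> span_list (cols A)" unfolding span_list_def
    by (intro CollectI exI[of _ "\<lambda>i. w $ i"] conjI L) (simp add: class_ring_simps)?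
  then show ?thesis using span_list_as_span[of "cols A"] A cols_dim by auto
qed

lemma rank_le_span:
  assumes M: "M \<in> carrier_mat n c" and A: "A \<in> carrier_mat n m"
    and sub: "set (cols M) \<subseteq> span (set (cols A))"
  shows "rank M \<le> m"
proof -
  have cM: "set (cols M) \<subseteq> carrier_vec n" and cA: "set (cols A) \<subseteq> carrier_vec n" using cols_dim[of M] cols_dim[of A] M A by auto
  have "span (set (cols M)) \<subseteq> span (set (cols A))"
    by (rule span_is_subset[OF sub span_is_submodule[OF cA]])
  then have "vectorspace.dim class_ring (vs (span (set (cols M)))) \<le> vectorspace.dim class_ring (vs (span (set (cols A))))"
    by (intro dim_mono span_is_subspace cM cA fin_dim_span_cols[OF M] fin_dim_span_cols[OF A])
  then have "rank M \<le> rank A" unfolding rank_def .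
  also have "rank A \<le> m" by (rule rank_le_nc[OF A])
  finally show ?thesis .
qed

lemma span_list_mat: assumes "set bs \<subseteq> carrier_vec n"
  shows "v \<in> span (set bs) \<Longrightarrow> \<exists>w \<in> carrier_vec (length bs). v = mat_of_cols n bs *\<^sub>v w"
proof -
  assume "v \<in> span (set bs)"
  then have "v \<in> span_list bs" using span_list_as_span[OF assms] by simp
  then obtain c where v: "v = lincomb_list c bs" unfolding span_list_def by auto
  have "\<forall>w\<in>set bs. dim_vec w = n" using assms by auto
  from lincomb_list_as_mat_mult[OF this, of c] v show ?thesis by auto
qed

lemma factor_rank: assumes P: "P \<in> carrier_mat n c"
  shows "\<exists>bs. length bs = rank P \<and> set bs \<subseteq> carrier_vec n \<and>
     (\<forall>v \<in> carrier_vec c. \<exists>w \<in> carrier_vec (length bs). P *\<^sub>v v = mat_of_cols n bs *\<^sub>v w)"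
proof -
  let ?W = "span (set (cols P))"
  have cP: "set (cols P) \<subseteq> carrier_vec n" using cols_dim[of P] P by auto
  have sub: "subspace class_ring ?W V" by (rule span_is_subspace) (use cP in auto)
  interpret W: vectorspace class_ring "vs ?W" by (rule subspace_is_vs[OF sub])
  have fd: "W.fin_dim" by (rule fin_dim_span_cols[OF P])
  obtain \<beta> where fb: "finite \<beta>" and bb: "W.basis \<beta>" using W.finite_basis_exists[OF fd] by auto
  have card: "card \<beta> = rank P" unfolding rank_def using W.dim_basis[OF fb bb] by simp
  have bW: "\<beta> \<subseteq> ?W" using bb unfolding W.basis_def by auto
  have "W.span \<beta> = ?W" using bb unfolding W.basis_def by auto
  moreover have "W.span \<beta> = span \<beta>"
    by (rule span_li_not_depend(1)[OF bW span_is_submodule]) (use cP in auto)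
  ultimately have sp: "span \<beta> = ?W" by simp
  obtain bs where bs: "set bs = \<beta>" "distinct bs" using finite_distinct_list[OF fb] by auto
  have len: "length bs = rank P" using distinct_card[OF bs(2)] bs(1) card by simp
  have cW: "?W \<subseteq> carrier_vec n" using span_is_subset2[of "set (cols P)"] cP by auto
  have cb: "set bs \<subseteq> carrier_vec n" using bs(1) bW cW by auto
  have "\<forall>v \<in> carrier_vec c. \<exists>w \<in> carrier_vec (length bs). P *\<^sub>v (v::'a vec) = mat_of_cols n bs *\<^sub>v w"
  proof
    fix v :: "'a vec" assume v: "v \<in> carrier_vec c"
    have "P *\<^sub>v v \<in> span (set bs)" using mult_in_span[OF P v] sp bs(1) by simp
    then show "\<exists>w \<in> carrier_vec (length bs). P *\<^sub>v v = mat_of_cols n bs *\<^sub>v w"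
      by (rule span_list_mat[OF cb])
  qed
  then show ?thesis using len cb by blast
qed

end


context vec_space begin

lemma lin_P: assumes P: "P \<in> carrier_mat n n"
  shows "linear_map class_ring V V (\<lambda>v. P *\<^sub>v v)"
  unfolding linear_map_def mod_hom_def mod_hom_axioms_def LinearCombinations.module_hom_def
  using vectorspace_axioms module_axioms P
  by (auto simp: mult_add_distrib_mat_vec[OF P] mult_mat_vec[OF P])

lemma span_cols_eq_im: assumes P: "P \<in> carrier_mat n c"
  shows "span (set (cols P)) = (\<lambda>v. P *\<^sub>v v) ` carrier_vec c"
proof
  show "(\<lambda>v. P *\<^sub>v v) ` carrier_vec c \<subseteq> span (set (cols P))"
    using mult_in_span[OF P] by auto
  show "span (set (cols P)) \<subseteq> (\<lambda>v. P *\<^sub>v v) ` carrier_vec c"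
  proof
    fix x assume "x \<in> span (set (cols P))"
    then obtain w where w: "w \<in> carrier_vec (length (cols P))" and x: "x = mat_of_cols n (cols P) *\<^sub>v w"
      using span_list_mat[of "cols P" x] cols_dim[of P] P by auto
    have "mat_of_cols n (cols P) = P" using P mat_of_cols_cols[of P] by auto
    then show "x \<in> (\<lambda>v. P *\<^sub>v v) ` carrier_vec c" using w x P by auto
  qed
qed

lemma rank_sq_zero: assumes P: "P \<in> carrier_mat n n" and PP: "P * P = 0\<^sub>m n n"
  shows "2 * rank P \<le> n"
proof -
  interpret L: linear_map class_ring V V "\<lambda>v. P *\<^sub>v v" by (rule lin_P[OF P])
  have im: "L.imT = span (set (cols P))"
    unfolding L.im_def using span_cols_eq_im[OF P] by simp
  have ker: "L.kerT = mat_kernel P"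
    unfolding L.ker_def mat_kernel_def using P by auto
  have rn: "vectorspace.dim class_ring (vs L.imT) + vectorspace.dim class_ring (vs L.kerT) = n"
    using L.rank_nullity[OF fin_dim] dim_is_n by simp
  have sub: "L.imT \<subseteq> L.kerT"
  proof
    fix x assume "x \<in> L.imT"
    then obtain v where v: "v \<in> carrier_vec n" and x: "x = P *\<^sub>v v" unfolding L.im_def by auto
    have "P *\<^sub>v x = (P * P) *\<^sub>v v" using x P v by simp
    also have "\<dots> = 0\<^sub>v n" using PP v by (simp add: zero_mult_vec)
    finally show "x \<in> L.kerT" unfolding L.ker_def using x P v by simp
  qed
  interpret K: kernel n n P by unfold_locales (rule P)
  obtain B where fB: "finite B" and bB: "K.basis B" using kernel_basis_exists[OF P] by auto
  have fK: "K.Ker.fin_dim" unfolding K.Ker.fin_dim_def using fB bB unfolding K.Ker.basis_def by auto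
  have fK': "vectorspace.fin_dim class_ring (vs L.kerT)" using fK unfolding ker .
  have fI: "vectorspace.fin_dim class_ring (vs L.imT)" unfolding im by (rule fin_dim_span_cols[OF P])
  have "vectorspace.dim class_ring (vs L.imT) \<le> vectorspace.dim class_ring (vs L.kerT)"
    by (rule dim_mono[OF L.imT_is_subspace L.kerT_is_subspace sub fI fK'])
  moreover have "rank P = vectorspace.dim class_ring (vs L.imT)" unfolding rank_def im ..
  ultimately show ?thesis using rn by linarith
qed

end


context dset begin

lemma ket_c[simp]: "ket d x v \<in> carrier_vec N"
  unfolding ket_def by (rule carrier_vecI) (simp add: carrier_matD(1)[OF P_carrier[of x]])

lemma bil: fixes M :: "complex mat" assumes u: "u \<in> carrier_vec N" and w: "w \<in> carrier_vec N" and M: "M \<in> carrier_mat N N"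
  shows "u \<bullet> (M *\<^sub>v w) = w \<bullet> (transpose_mat M *\<^sub>v u)"
proof -
  have "(transpose_mat M *\<^sub>v u) \<bullet> w = u \<bullet> (M *\<^sub>v w)" by (rule transpose_vec_mult_scalar[OF M w u])
  moreover have "(transpose_mat M *\<^sub>v u) \<bullet> w = w \<bullet> (transpose_mat M *\<^sub>v u)"
    by (rule comm_scalar_prod[of _ N]) (use M u w in auto)
  ultimately show ?thesis by simp
qed

lemma smult_vec_sp: fixes M :: "complex mat" assumes M: "M \<in> carrier_mat N N" and u: "u \<in> carrier_vec N" and w: "w \<in> carrier_vec N"
  shows "u \<bullet> ((c \<cdot>\<^sub>m M) *\<^sub>v w) = c * (u \<bullet> (M *\<^sub>v w))"
  using smult_mult_vec[OF M w, of c] M u by simp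

lemma br2_swap: "br2 d p z b a = sig k * br2 d p z a b"
proof -
  let ?a = "ket d (p a) (z a)" and ?b = "ket d (p b) (z b)"
  have "br2 d p z b a = ?b \<bullet> (C *\<^sub>v ?a)" by (simp add: br2_def)
  also have "\<dots> = ?a \<bullet> (transpose_mat C *\<^sub>v ?b)" by (rule bil) auto
  also have "\<dots> = sig k * (?a \<bullet> (C *\<^sub>v ?b))" unfolding CT by (rule smult_vec_sp) auto
  finally show ?thesis by (simp add: br2_def)
qed

lemma br3_swap: "br3 d p z b j a = sig k * eps * br3 d p z a j b"
proof -
  let ?a = "ket d (p a) (z a)" and ?b = "ket d (p b) (z b)" and ?P = "slashP d (p j)"
  have P: "?P \<in> carrier_mat N N" by simp
  have CP: "C * ?P \<in> carrier_mat N N" by (rule mult_carrier_mat[OF Cc P])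
  have "br3 d p z b j a = ?b \<bullet> ((C * ?P) *\<^sub>v ?a)" using assoc_mult_mat_vec[OF Cc P ket_c] by (simp add: br3_def)
  also have "\<dots> = ?a \<bullet> (transpose_mat (C * ?P) *\<^sub>v ?b)" by (rule bil[OF _ _ CP]) auto
  also have "transpose_mat (C * ?P) = (sig k * eps) \<cdot>\<^sub>m (C * ?P)"
  proof -
    have "transpose_mat (C * ?P) = transpose_mat ?P * transpose_mat C" by (rule transpose_mult[OF Cc P])
    also have "\<dots> = transpose_mat ?P * (sig k \<cdot>\<^sub>m C)" unfolding CT ..
    also have "\<dots> = sig k \<cdot>\<^sub>m (transpose_mat ?P * C)" by (rule mult_smult_distrib[OF transpose_carrier_mat[THEN iffD2, OF P] Cc])
    also have "\<dots> = (sig k * eps) \<cdot>\<^sub>m (C * ?P)" unfolding P_T by (simp add: smult_smult_mat)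
    finally show ?thesis .
  qed
  also have "?a \<bullet> (((sig k * eps) \<cdot>\<^sub>m (C * ?P)) *\<^sub>v ?b) = (sig k * eps) * (?a \<bullet> ((C * ?P) *\<^sub>v ?b))"
    by (rule smult_vec_sp[OF CP]) auto
  finally show ?thesis using assoc_mult_mat_vec[OF Cc P ket_c] by (simp add: br3_def)
qed

lemma PTCP: assumes "mdot d x x = 0"
  shows "transpose_mat (slashP d x) * (C * slashP d x) = 0\<^sub>m N N"
proof -
  let ?P = "slashP d x"
  have P: "?P \<in> carrier_mat N N" by simp
  have "transpose_mat ?P * (C * ?P) = (transpose_mat ?P * C) * ?P"
    by (rule assoc_mult_mat[symmetric, OF transpose_carrier_mat[THEN iffD2, OF P] Cc P])
  also have "\<dots> = (eps \<cdot>\<^sub>m (C * ?P)) * ?P" unfolding P_T ..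
  also have "\<dots> = eps \<cdot>\<^sub>m (C * (?P * ?P))"
    using mult_smult_assoc_mat[OF mult_carrier_mat[OF Cc P] P] assoc_mult_mat[OF Cc P P] by simp
  also have "\<dots> = 0\<^sub>m N N" unfolding P_null[OF assms] using right_mult_zero_mat[OF Cc] by simp
  finally show ?thesis .
qed

lemma br2_diag: assumes "mdot d (p i) (p i) = 0" and zi: "z i \<in> carrier_vec N"
  shows "br2 d p z i i = 0"
proof -
  let ?P = "slashP d (p i)"
  have P: "?P \<in> carrier_mat N N" by simp
  have "br2 d p z i i = (?P *\<^sub>v z i) \<bullet> (C *\<^sub>v (?P *\<^sub>v z i))" by (simp add: br2_def ket_def)
  also have "\<dots> = z i \<bullet> (transpose_mat ?P *\<^sub>v (C *\<^sub>v (?P *\<^sub>v z i)))"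
    using transpose_vec_mult_scalar[OF transpose_carrier_mat[THEN iffD2, OF P] mult_mat_vec_carrier[OF Cc mult_mat_vec_carrier[OF P zi]] zi] by simp
  also have "transpose_mat ?P *\<^sub>v (C *\<^sub>v (?P *\<^sub>v z i)) = (transpose_mat ?P * (C * ?P)) *\<^sub>v z i"
    using assoc_mult_mat_vec[OF transpose_carrier_mat[THEN iffD2, OF P] mult_carrier_mat[OF Cc P] zi]
      assoc_mult_mat_vec[OF Cc P zi] by simp
  also have "\<dots> = 0\<^sub>v N" unfolding PTCP[OF assms(1)] using zi by (simp add: zero_mult_vec)
  finally show ?thesis using zi by simp
qed

lemma br3_jj1: assumes "mdot d (p j) (p j) = 0" and zj: "z j \<in> carrier_vec N"
  shows "br3 d p z j j i = 0"
proof -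
  let ?P = "slashP d (p j)" and ?w = "ket d (p i) (z i)"
  have P: "?P \<in> carrier_mat N N" by simp
  have w: "?w \<in> carrier_vec N" by simp
  have "br3 d p z j j i = (?P *\<^sub>v z j) \<bullet> (C *\<^sub>v (?P *\<^sub>v ?w))" by (simp add: br3_def ket_def)
  also have "\<dots> = z j \<bullet> (transpose_mat ?P *\<^sub>v (C *\<^sub>v (?P *\<^sub>v ?w)))"
    using transpose_vec_mult_scalar[OF transpose_carrier_mat[THEN iffD2, OF P] mult_mat_vec_carrier[OF Cc mult_mat_vec_carrier[OF P w]] zj] by simp
  also have "transpose_mat ?P *\<^sub>v (C *\<^sub>v (?P *\<^sub>v ?w)) = (transpose_mat ?P * (C * ?P)) *\<^sub>v ?w"
    using assoc_mult_mat_vec[OF transpose_carrier_mat[THEN iffD2, OF P] mult_carrier_mat[OF Cc P] w]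
      assoc_mult_mat_vec[OF Cc P w] by simp
  also have "\<dots> = 0\<^sub>v N" unfolding PTCP[OF assms(1)] using w by (simp add: zero_mult_vec)
  finally show ?thesis using zj by simp
qed

lemma br3_jj2: assumes "mdot d (p j) (p j) = 0" and zj: "z j \<in> carrier_vec N"
  shows "br3 d p z i j j = 0"
proof -
  let ?P = "slashP d (p j)"
  have P: "?P \<in> carrier_mat N N" by simp
  have "?P *\<^sub>v (?P *\<^sub>v z j) = (?P * ?P) *\<^sub>v z j" using assoc_mult_mat_vec[OF P P zj] by simp
  also have "\<dots> = 0\<^sub>v N" unfolding P_null[OF assms(1)] using zj by (simp add: zero_mult_vec)
  finally have "?P *\<^sub>v ket d (p j) (z j) = 0\<^sub>v N" by (simp add: ket_def)
  then show ?thesis by (simp add: br3_def mult_zero_vec[OF Cc])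
qed

lemma sum_br3: assumes V: "in_V d n p"
  shows "(\<Sum>j = 1..n. br3 d p z a j b) = 0"
proof -
  let ?u = "ket d (p a) (z a)" and ?w = "ket d (p b) (z b)"
  define L where "L t = ?u \<bullet> (C *\<^sub>v (G t *\<^sub>v ?w))" for t
  have "(\<Sum>j = 1..n. br3 d p z a j b) = (\<Sum>j = 1..n. \<Sum>t\<in>{1..d}. cf (p j) t * L t)"
    unfolding br3_def L_def by (rule sum.cong[OF refl], rule P_lin) auto
  also have "\<dots> = (\<Sum>t\<in>{1..d}. (\<Sum>j = 1..n. cf (p j) t) * L t)"
    by (subst sum.swap) (simp add: sum_distrib_right)
  also have "\<dots> = 0"
  proof (rule sum.neutral, intro ballI)
    fix t assume t: "t \<in> {1..d}"
    have "(\<Sum>j = 1..n. cf (p j) t) = 0"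
    proof (cases "t = 1")
      case True
      then show ?thesis using V t unfolding in_V_def cf_def by (simp add: sum_negf)
    next
      case False
      then show ?thesis using V t unfolding in_V_def cf_def by simp
    qed
    then show "(\<Sum>j = 1..n. cf (p j) t) * L t = 0" by simp
  qed
  finally show ?thesis .
qed

end


lemma vec_self: assumes "v \<in> carrier_vec n" shows "vec n (\<lambda>i. v $ i) = v"
proof -
  have dv: "dim_vec v = n" using carrier_vecD[OF assms] .
  show ?thesis by (rule eq_vecI) (simp_all add: dv)
qed

context dset begin

lemma sig_eps: "sig k * eps = (if d mod 8 \<in> {1, 2, 3, 4} then 1 else -1)"
proof -
  have h1: "k mod 4 = (d mod 8) div 2" by presburger
  have h2: "even d \<longleftrightarrow> even (d mod 8)" by presburger
  have h3: "even k \<longleftrightarrow> even (k mod 4)" by presburger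
  have pw: "(-1::complex) ^ k = (if even k then 1 else -1)" by (simp add: minus_one_power_iff)
  have "d mod 8 < 8" by simp
  then have "d mod 8 = 0 \<or> d mod 8 = 1 \<or> d mod 8 = 2 \<or> d mod 8 = 3 \<or> d mod 8 = 4 \<or> d mod 8 = 5 \<or> d mod 8 = 6 \<or> d mod 8 = 7"
    by linarith
  then show ?thesis
    using h1 h2 h3 unfolding sig_def eps_def pw by (elim disjE) auto
qed

definition Kt :: "nat \<Rightarrow> (nat \<Rightarrow> nat \<Rightarrow> complex) \<Rightarrow> (nat \<Rightarrow> complex vec) \<Rightarrow> complex mat" where
  "Kt n p z = mat n N (\<lambda>(a, t). ket d (p (a + 1)) (z (a + 1)) $ t)"

lemma Kt_carrier: "Kt n p z \<in> carrier_mat n N" by (simp add: Kt_def)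

lemma Kt_mult: assumes v: "v \<in> carrier_vec N"
  shows "Kt n p z *\<^sub>v v = vec n (\<lambda>a. ket d (p (a + 1)) (z (a + 1)) \<bullet> v)"
proof (rule eq_vecI)
  fix a assume a: "a < dim_vec (vec n (\<lambda>a. ket d (p (a + 1)) (z (a + 1)) \<bullet> v))"
  then have a': "a < n" by simp
  have kc: "ket d (p (a + 1)) (z (a + 1)) \<in> carrier_vec N" by simp
  have "vec N (\<lambda>t. ket d (p (a + 1)) (z (a + 1)) $ t) = ket d (p (a + 1)) (z (a + 1))"
    by (rule vec_self[OF kc])
  then have "row (Kt n p z) a = ket d (p (a + 1)) (z (a + 1))"
    using a' by (simp add: Kt_def)
  then show "(Kt n p z *\<^sub>v v) $ a = vec n (\<lambda>a. ket d (p (a + 1)) (z (a + 1)) \<bullet> v) $ a"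
    using a' by (simp add: Kt_def)
qed (simp add: Kt_def)

lemma rank_S: "mrank n (Smat d n p z) \<le> N"
proof -
  interpret VS: vec_space "TYPE(complex)" n .
  have "set (cols (Smat d n p z)) \<subseteq> VS.span (set (cols (Kt n p z)))"
  proof
    fix x assume "x \<in> set (cols (Smat d n p z))"
    then obtain b where b: "b < n" and x: "x = col (Smat d n p z) b" by (auto simp: cols_def Smat_def)
    have w: "C *\<^sub>v ket d (p (b+1)) (z (b+1)) \<in> carrier_vec N" by (rule mult_mat_vec_carrier[OF Cc ket_c])
    have "x = Kt n p z *\<^sub>v (C *\<^sub>v ket d (p (b+1)) (z (b+1)))"
      unfolding x Kt_mult[OF w] using b by (simp add: Smat_def br2_def)
    then show "x \<in> VS.span (set (cols (Kt n p z)))" using VS.mult_in_span[OF Kt_carrier w] by simp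
  qed
  moreover have Sc: "Smat d n p z \<in> carrier_mat n n" by (simp add: Smat_def)
  ultimately show ?thesis using VS.rank_le_span[OF Sc Kt_carrier] by simp
qed

lemma rank_T: assumes null: "mdot d (p j) (p j) = 0"
  shows "mrank n (Tmat d n p z j) \<le> 2 ^ (k - 1)"
proof -
  interpret VS: vec_space "TYPE(complex)" n .
  interpret VN: vec_space "TYPE(complex)" N .
  let ?P = "slashP d (p j)"
  have P: "?P \<in> carrier_mat N N" by simp
  obtain bs where len: "length bs = VN.rank ?P" and cb: "set bs \<subseteq> carrier_vec N"
    and fac: "\<forall>v \<in> carrier_vec N. \<exists>w \<in> carrier_vec (length bs). ?P *\<^sub>v v = mat_of_cols N bs *\<^sub>v w"
    using VN.factor_rank[OF P] by blast
  have r2: "2 * VN.rank ?P \<le> N" by (rule VN.rank_sq_zero[OF P P_null[OF null]])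
  let ?U = "mat_of_cols N bs"
  have U: "?U \<in> carrier_mat N (length bs)" by simp
  have M: "Kt n p z * (C * ?U) \<in> carrier_mat n (length bs)"
    by (rule mult_carrier_mat[OF Kt_carrier mult_carrier_mat[OF Cc U]])
  have "set (cols (Tmat d n p z j)) \<subseteq> VS.span (set (cols (Kt n p z * (C * ?U))))"
  proof
    fix x assume "x \<in> set (cols (Tmat d n p z j))"
    then obtain b where b: "b < n" and x: "x = col (Tmat d n p z j) b" by (auto simp: cols_def Tmat_def)
    obtain w where w: "w \<in> carrier_vec (length bs)" and Pw: "?P *\<^sub>v ket d (p (b+1)) (z (b+1)) = ?U *\<^sub>v w"
      using fac ket_c by blast
    have v: "C *\<^sub>v (?P *\<^sub>v ket d (p (b+1)) (z (b+1))) \<in> carrier_vec N"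
      by (rule mult_mat_vec_carrier[OF Cc mult_mat_vec_carrier[OF P ket_c]])
    have "x = Kt n p z *\<^sub>v (C *\<^sub>v (?P *\<^sub>v ket d (p (b+1)) (z (b+1))))"
      unfolding x Kt_mult[OF v] using b by (simp add: Tmat_def br3_def)
    also have "\<dots> = (Kt n p z * (C * ?U)) *\<^sub>v w"
      unfolding Pw using assoc_mult_mat_vec[OF Kt_carrier mult_carrier_mat[OF Cc U] w] assoc_mult_mat_vec[OF Cc U w]
      by simp
    finally show "x \<in> VS.span (set (cols (Kt n p z * (C * ?U))))" using VS.mult_in_span[OF M w] by simp
  qed
  moreover have Tc: "Tmat d n p z j \<in> carrier_mat n n" by (simp add: Tmat_def)
  ultimately have "mrank n (Tmat d n p z j) \<le> length bs" using VS.rank_le_span[OF Tc M] by simp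
  moreover have "2 * length bs \<le> 2 * 2 ^ (k - 1)"
  proof -
    have "(2::nat) * 2 ^ (k - 1) = 2 ^ k" using k1 by (cases k) auto
    then show ?thesis using r2 len by simp
  qed
  ultimately show ?thesis by linarith
qed

end

theorem mainTheorem7:
  fixes d n k :: nat and p :: "nat \<Rightarrow> nat \<Rightarrow> complex" and z :: "nat \<Rightarrow> complex vec"
  assumes "d \<ge> 2" and "n \<ge> 1" and "k = d div 2"
    and "in_V d n p"
    and "\<forall>i\<in>{1..n}. dim_vec (z i) = 2 ^ k"
  shows "(mrank n (Smat d n p z) \<le> 2 ^ k
      \<and> (\<forall>i\<in>{1..n}. br2 d p z i i = 0)
      \<and> (k mod 4 \<in> {0, 3} \<longrightarrow> transpose_mat (Smat d n p z) = Smat d n p z)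
      \<and> (k mod 4 \<notin> {0, 3} \<longrightarrow> transpose_mat (Smat d n p z) = - Smat d n p z))
    \<and> (\<forall>j\<in>{1..n}.
         mrank n (Tmat d n p z j) \<le> 2 ^ (k - 1)
       \<and> (\<forall>i\<in>{1..n}. br3 d p z j j i = 0 \<and> br3 d p z i j j = 0)
       \<and> (d mod 8 \<in> {1, 2, 3, 4} \<longrightarrow> transpose_mat (Tmat d n p z j) = Tmat d n p z j)
       \<and> (d mod 8 \<notin> {1, 2, 3, 4} \<longrightarrow> transpose_mat (Tmat d n p z j) = - Tmat d n p z j))
    \<and> (\<forall>a\<in>{1..n}. \<forall>b\<in>{1..n}. (\<Sum>j = 1..n. br3 d p z a j b) = 0)"
proof -
  interpret D: dset d by unfold_locales (rule assms(1))
  have kk: "k = d div 2" by (rule assms(3))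
  have null: "\<And>i. i \<in> {1..n} \<Longrightarrow> mdot d (p i) (p i) = 0" using assms(4) unfolding in_V_def by auto
  have zc: "\<And>i. i \<in> {1..n} \<Longrightarrow> z i \<in> carrier_vec (2 ^ (d div 2))" using assms(5) kk by (auto intro!: carrier_vecI)
  have trS: "transpose_mat (Smat d n p z) = sig k \<cdot>\<^sub>m Smat d n p z"
  proof (rule eq_matI)
    fix a b assume "a < dim_row (sig k \<cdot>\<^sub>m Smat d n p z)" "b < dim_col (sig k \<cdot>\<^sub>m Smat d n p z)"
    then have ab: "a < n" "b < n" by (simp_all add: Smat_def)
    have e: "br2 d p z (b+1) (a+1) = sig k * br2 d p z (a+1) (b+1)"
      using D.br2_swap[where b="b+1" and a="a+1"] kk by simp
    show "transpose_mat (Smat d n p z) $$ (a, b) = (sig k \<cdot>\<^sub>m Smat d n p z) $$ (a, b)"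
      using ab e by (simp add: Smat_def)
  qed (simp_all add: Smat_def)
  have trT: "\<And>j. transpose_mat (Tmat d n p z j) = (if d mod 8 \<in> {1, 2, 3, 4} then 1 else -1) \<cdot>\<^sub>m Tmat d n p z j"
  proof (rule eq_matI)
    fix j a b assume "a < dim_row ((if d mod 8 \<in> {1, 2, 3, 4} then 1 else -1) \<cdot>\<^sub>m Tmat d n p z j)"
      "b < dim_col ((if d mod 8 \<in> {1, 2, 3, 4} then 1 else -1) \<cdot>\<^sub>m Tmat d n p z j)"
    then have ab: "a < n" "b < n" by (simp_all add: Tmat_def)
    have e: "br3 d p z (b+1) j (a+1) = (if d mod 8 \<in> {1, 2, 3, 4} then 1 else -1) * br3 d p z (a+1) j (b+1)"
      using D.br3_swap[where b="b+1" and a="a+1" and j=j] D.sig_eps by simp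
    show "transpose_mat (Tmat d n p z j) $$ (a, b) = ((if d mod 8 \<in> {1, 2, 3, 4} then 1 else -1) \<cdot>\<^sub>m Tmat d n p z j) $$ (a, b)"
      using ab e by (simp add: Tmat_def)
  qed (simp_all add: Tmat_def)
  have A1: "mrank n (Smat d n p z) \<le> 2 ^ k" using D.rank_S kk by simp
  have A2: "\<forall>i\<in>{1..n}. br2 d p z i i = 0" using D.br2_diag null zc by blast
  have A3: "k mod 4 \<in> {0, 3} \<longrightarrow> transpose_mat (Smat d n p z) = Smat d n p z"
    using trS by (simp add: sig_def)
  have A4: "k mod 4 \<notin> {0, 3} \<longrightarrow> transpose_mat (Smat d n p z) = - Smat d n p z"
    using trS by (simp add: sig_def neg_smult)
  have B: "\<forall>j\<in>{1..n}.
         mrank n (Tmat d n p z j) \<le> 2 ^ (k - 1)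
       \<and> (\<forall>i\<in>{1..n}. br3 d p z j j i = 0 \<and> br3 d p z i j j = 0)
       \<and> (d mod 8 \<in> {1, 2, 3, 4} \<longrightarrow> transpose_mat (Tmat d n p z j) = Tmat d n p z j)
       \<and> (d mod 8 \<notin> {1, 2, 3, 4} \<longrightarrow> transpose_mat (Tmat d n p z j) = - Tmat d n p z j)"
  proof
    fix j assume j: "j \<in> {1..n}"
    show "mrank n (Tmat d n p z j) \<le> 2 ^ (k - 1)
       \<and> (\<forall>i\<in>{1..n}. br3 d p z j j i = 0 \<and> br3 d p z i j j = 0)
       \<and> (d mod 8 \<in> {1, 2, 3, 4} \<longrightarrow> transpose_mat (Tmat d n p z j) = Tmat d n p z j)
       \<and> (d mod 8 \<notin> {1, 2, 3, 4} \<longrightarrow> transpose_mat (Tmat d n p z j) = - Tmat d n p z j)"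
      using D.rank_T[where p=p and j=j and n=n and z=z, OF null[OF j]]
        D.br3_jj1[where p=p and j=j and z=z, OF null[OF j] zc[OF j]] D.br3_jj2[where p=p and j=j and z=z, OF null[OF j] zc[OF j]]
        trT[of j] kk by (simp add: neg_smult)
  qed
  have C: "\<forall>a\<in>{1..n}. \<forall>b\<in>{1..n}. (\<Sum>j = 1..n. br3 d p z a j b) = 0"
    using D.sum_br3[OF assms(4)] by blast
  show ?thesis using A1 A2 A3 A4 B C by blast
qed


end
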